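(* Let $X$ be a compact metric space and let $F_1,F_2$ be two $k$-iterated contraction systems on $X$ (same $k$). Let $A_1,A_2:X\to\mathbb{R}$ be potentials, normalized with respect to $F_1$ and $F_2$ respectively, with $A_2$ Lipschitz. Let $\mathscr{L}_i$ be the transfer operator defined by $(F_i,A_i)$ on continuous functions $X\to\mathbb{R}$. Then for every Borel probability measure $\mu$ on $X$, \[W_1(\mathscr{L}_1^*\mu,\mathscr{L}_2^*\mu)\le\operatorname{diam}X\cdot\|A_1-A_2\|_\infty+(\operatorname{Lip}(A_2)\operatorname{diam}X+1)\,d_\infty(F_1,F_2).\]
   Context: A $k$-multiset is an unordered list of $k$ elements with repetitions allowed; sums over it count multiplicities. A $k$-iterated contraction system (ICS) on $X$ assigns to each $x\in X$ a $k$-multiset $F(x)$ of points of $X$ such that for some $\theta\in(0,1)$ and all $x,y$ there are enumerations $F(x)=\{x_1,\dots,x_k\}$, $F(y)=\{y_1,\dots,y_k\}$ with $d(x_i,y_i)\le\theta d(x,y)$. $A_i$ normalized w.r.t. $F_i$ means $\sum_{y\in F_i(x)}e^{A_i(y)}=1$ for all $x$. $\mathscr{L}_if(x)=\sum_{y\in F_i(x)}e^{A_i(y)}f(y)$ and $\mathscr{L}_i^*$ is the dual on measures: $\int\varphi\,d(\mathscr{L}_i^*\mu)=\int\mathscr{L}_i\varphi\,d\mu$. $d_\infty(F_1,F_2)=\sup_{x\in X}\inf\sup_jd(y_1^j,y_2^j)$, where the infimum is over all enumerations $F_1(x)=\{y_1^1,\dots,y_1^k\}$, $F_2(x)=\{y_2^1,\dots,y_2^k\}$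 (i.e. bijections between the multisets). $W_1$ is the 1-Wasserstein distance: $W_1(\mu,\nu)=\inf_\pi\int d(x,y)\,d\pi$ over couplings $\pi$ of $\mu,\nu$. *)

theory Defs
  imports "HOL-Probability.Probability" "HOL-Library.Multiset"
begin

text \<open>The compact metric space X is represented as a type 'a of class metric_space
  with compact UNIV; Borel probability measures are measures M with sets M = sets borel.\<close>

definition is_ICS :: "nat \<Rightarrow> ('a::metric_space \<Rightarrow> 'a multiset) \<Rightarrow> bool" where
  "is_ICS k F \<longleftrightarrow> (\<forall>x. size (F x) = k) \<and>
     (\<exists>\<theta>::real. 0 < \<theta> \<and> \<theta> < 1 \<and>
        (\<forall>x y. \<exists>xs ys. mset xs = F x \<and> mset ys = F y \<and>
            (\<forall>i<k. dist (xs ! i) (ys ! i) \<le> \<theta> * dist x y)))"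

definition normalized :: "('a \<Rightarrow> real) \<Rightarrow> ('a \<Rightarrow> 'a multiset) \<Rightarrow> bool" where
  "normalized A F \<longleftrightarrow> (\<forall>x. (\<Sum>y\<in>#F x. exp (A y)) = 1)"

definition transfer_op :: "('a \<Rightarrow> 'a multiset) \<Rightarrow> ('a \<Rightarrow> real) \<Rightarrow> ('a \<Rightarrow> real) \<Rightarrow> 'a \<Rightarrow> real" where
  "transfer_op F A f x = (\<Sum>y\<in>#F x. exp (A y) * f y)"

text \<open>nu is the dual transfer operator applied to mu: a finite Borel measure with
  int phi d nu = int (L phi) d mu for every continuous phi.\<close>
definition is_dual_transfer :: "('a::metric_space \<Rightarrow> 'a multiset) \<Rightarrow> ('a \<Rightarrow> real) \<Rightarrow> 'a measure \<Rightarrow> 'a measure \<Rightarrow> bool" where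
  "is_dual_transfer F A \<mu> \<nu> \<longleftrightarrow> finite_measure \<nu> \<and> sets \<nu> = sets borel \<and>
     (\<forall>\<phi>::'a \<Rightarrow> real. continuous_on UNIV \<phi> \<longrightarrow>
        integral\<^sup>L \<nu> \<phi> = integral\<^sup>L \<mu> (transfer_op F A \<phi>))"

definition couplings :: "'a::metric_space measure \<Rightarrow> 'a measure \<Rightarrow> ('a \<times> 'a) measure set" where
  "couplings \<mu> \<nu> = {\<pi>. prob_space \<pi> \<and> sets \<pi> = sets (borel \<Otimes>\<^sub>M borel) \<and>
      distr \<pi> borel fst = \<mu> \<and> distr \<pi> borel snd = \<nu>}"

definition W1 :: "'a::metric_space measure \<Rightarrow> 'a measure \<Rightarrow> real" where
  "W1 \<mu> \<nu> = (INF \<pi>\<in>couplings \<mu> \<nu>. integral\<^sup>L \<pi> (\<lambda>z. dist (fst z) (snd z)))"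

definition d_inf :: "('a::metric_space \<Rightarrow> 'a multiset) \<Rightarrow> ('a \<Rightarrow> 'a multiset) \<Rightarrow> real" where
  "d_inf F1 F2 = (SUP x. INF p\<in>{(xs, ys). mset xs = F1 x \<and> mset ys = F2 x}.
      Max (insert 0 {dist (fst p ! j) (snd p ! j) | j. j < length (fst p)}))"

definition sup_norm :: "('a \<Rightarrow> real) \<Rightarrow> real" where
  "sup_norm f = (SUP x. \<bar>f x\<bar>)"

definition Lip :: "('a::metric_space \<Rightarrow> real) \<Rightarrow> real" where
  "Lip f = Inf {C. lipschitz_on C UNIV f}"

end

theory Submission
  imports Defs "HOL-Combinatorics.Permutations"
begin


lemma ics_size: "is_ICS k F \<Longrightarrow> size (F x) = k"
  unfolding is_ICS_def by blast

lemma ics_align: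
  assumes ics: "is_ICS k F" and ys: "mset ys = F x"
  shows "\<exists>zs. mset zs = F y \<and> (\<forall>i<k. dist (zs!i) (ys!i) \<le> dist y x)"
proof -
  obtain \<theta> :: real where th: "0 < \<theta>" "\<theta> < 1" and
    H: "\<forall>x y. \<exists>xs ys. mset xs = F x \<and> mset ys = F y \<and> (\<forall>i<k. dist (xs ! i) (ys ! i) \<le> \<theta> * dist x y)"
    using ics unfolding is_ICS_def by blast
  obtain xs' zs' where xz: "mset xs' = F x" "mset zs' = F y"
    and d: "\<forall>i<k. dist (xs' ! i) (zs' ! i) \<le> \<theta> * dist x y" using H by blast
  have lx: "length xs' = k" using xz(1) ics_size[OF ics, of x] by (metis size_mset)
  have lz: "length zs' = k" using xz(2) ics_size[OF ics, of y] by (metis size_mset)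
  from ys xz(1) have "mset ys = mset xs'" by simp
  then obtain \<rho> where rho: "\<rho> permutes {..<length xs'}" "permute_list \<rho> xs' = ys"
    by (rule mset_eq_permutation)
  define zs where "zs = permute_list \<rho> zs'"
  have "mset zs = F y" unfolding zs_def using rho(1) lx lz xz(2) by (simp add: mset_permute_list)
  moreover have "dist (zs!i) (ys!i) \<le> dist y x" if i: "i < k" for i
  proof -
    have ri: "\<rho> i < k" using permutes_in_image[OF rho(1)] i lx by auto
    have "zs!i = zs'!(\<rho> i)" unfolding zs_def using rho(1) lx lz i by (simp add: permute_list_nth)
    moreover have "ys!i = xs'!(\<rho> i)" using rho lx i by (metis permute_list_nth)
    ultimately have "dist (zs!i) (ys!i) = dist (xs'!(\<rho> i)) (zs'!(\<rho> i))" by (simp add: dist_commute)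
    also have "\<dots> \<le> \<theta> * dist x y" using d ri by blast
    also have "\<dots> \<le> dist y x" using th by (simp add: dist_commute mult_left_le_one_le)
    finally show ?thesis .
  qed
  ultimately show ?thesis by blast
qed

definition PK :: "nat \<Rightarrow> (nat \<Rightarrow> nat) set" where "PK k = {\<sigma>. \<sigma> permutes {..<k}}"

lemma finite_PK[simp]: "finite (PK k)"
  unfolding PK_def by (simp add: finite_permutations)

lemma id_PK: "id \<in> PK k" unfolding PK_def by (simp add: permutes_id)

lemma perm_sum_inv:
  assumes "length ys = k" "mset xs = mset ys"
  shows "(\<Sum>\<sigma>\<in>PK k. G (permute_list \<sigma> xs)) = (\<Sum>\<sigma>\<in>PK k. G (permute_list \<sigma> ys))"
proof -
  from assms(2) obtain \<rho> where rho: "\<rho> permutes {..<length ys}" "permute_list \<rho> ys = xs"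
    by (rule mset_eq_permutation)
  have rk: "\<rho> permutes {..<k}" using rho assms(1) by simp
  have eq: "permute_list \<sigma> xs = permute_list (\<rho> \<circ> \<sigma>) ys" if "\<sigma> \<in> PK k" for \<sigma>
    using that rho(2) assms(1) permute_list_compose[of \<sigma> ys \<rho>] unfolding PK_def by simp
  have "(\<Sum>\<sigma>\<in>PK k. G (permute_list \<sigma> xs)) = (\<Sum>\<sigma>\<in>PK k. G (permute_list (\<rho> \<circ> \<sigma>) ys))"
    by (rule sum.cong) (auto simp: eq)
  also have "\<dots> = (\<Sum>\<sigma>\<in>PK k. G (permute_list \<sigma> ys))"
  proof (rule sum.reindex_bij_witness[where i="\<lambda>\<sigma>. inv \<rho> \<circ> \<sigma>" and j="\<lambda>\<sigma>. \<rho> \<circ> \<sigma>"])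
    fix a assume "a \<in> PK k"
    show "inv \<rho> \<circ> (\<rho> \<circ> a) = a" using permutes_inv_o(2)[OF rk] by (simp add: o_assoc)
    show "\<rho> \<circ> a \<in> PK k" using \<open>a \<in> PK k\<close> rk unfolding PK_def by (simp add: permutes_compose)
  next
    fix b assume "b \<in> PK k"
    show "\<rho> \<circ> (inv \<rho> \<circ> b) = b" using permutes_inv_o(1)[OF rk] by (simp add: o_assoc)
    show "inv \<rho> \<circ> b \<in> PK k" using \<open>b \<in> PK k\<close> rk permutes_inv[OF rk] unfolding PK_def
      by (simp add: permutes_compose)
  qed simp
  finally show ?thesis .
qed

definition enum :: "('a \<Rightarrow> 'b multiset) \<Rightarrow> 'a \<Rightarrow> 'b list" where
  "enum F x = (SOME xs. mset xs = F x)"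

lemma mset_enum[simp]: "mset (enum F x) = F x"
  unfolding enum_def by (rule someI_ex) (rule ex_mset)

lemma length_enum: "is_ICS k F \<Longrightarrow> length (enum F x) = k"
  by (metis ics_size mset_enum size_mset)

definition seqcont :: "nat \<Rightarrow> ('a::metric_space list \<Rightarrow> 'a list \<Rightarrow> real) \<Rightarrow> bool" where
  "seqcont k G \<longleftrightarrow> (\<forall>a b an bn. length a = k \<longrightarrow> length b = k \<longrightarrow>
     (\<forall>n. length (an n) = k \<and> length (bn n) = k) \<longrightarrow>
     (\<forall>j<k. (\<lambda>n. an n ! j) \<longlonglongrightarrow> a ! j) \<longrightarrow> (\<forall>j<k. (\<lambda>n. bn n ! j) \<longlonglongrightarrow> b ! j) \<longrightarrow>
     (\<lambda>n. G (an n) (bn n)) \<longlonglongrightarrow> G a b)"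

lemma seqcontD:
  assumes "seqcont k G" "length a = k" "length b = k" "\<And>n. length (an n) = k" "\<And>n. length (bn n) = k"
    "\<And>j. j<k \<Longrightarrow> (\<lambda>n. an n ! j) \<longlonglongrightarrow> a ! j" "\<And>j. j<k \<Longrightarrow> (\<lambda>n. bn n ! j) \<longlonglongrightarrow> b ! j"
  shows "(\<lambda>n. G (an n) (bn n)) \<longlonglongrightarrow> G a b"
  using assms unfolding seqcont_def by blast

definition Sym :: "nat \<Rightarrow> ('a \<Rightarrow> 'a multiset) \<Rightarrow> ('a \<Rightarrow> 'a multiset) \<Rightarrow> ('a list \<Rightarrow> 'a list \<Rightarrow> real) \<Rightarrow> 'a \<Rightarrow> real" where
  "Sym k F1 F2 G x = (\<Sum>\<sigma>\<in>PK k. \<Sum>\<tau>\<in>PK k. G (permute_list \<sigma> (enum F1 x)) (permute_list \<tau> (enum F2 x)))"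

lemma Sym_any:
  assumes "is_ICS k F1" "is_ICS k F2" "mset xs = F1 x" "mset ys = F2 x"
  shows "Sym k F1 F2 G x = (\<Sum>\<sigma>\<in>PK k. \<Sum>\<tau>\<in>PK k. G (permute_list \<sigma> xs) (permute_list \<tau> ys))"
proof -
  have l1: "length xs = k" using assms(1,3) by (metis ics_size size_mset)
  have l2: "length ys = k" using assms(2,4) by (metis ics_size size_mset)
  have "Sym k F1 F2 G x = (\<Sum>\<sigma>\<in>PK k. \<Sum>\<tau>\<in>PK k. G (permute_list \<sigma> (enum F1 x)) (permute_list \<tau> ys))"
    unfolding Sym_def
    by (rule sum.cong[OF refl], rule perm_sum_inv[where G="\<lambda>l. G _ l"]) (use l2 assms in auto)
  also have "\<dots> = (\<Sum>\<tau>\<in>PK k. \<Sum>\<sigma>\<in>PK k. G (permute_list \<sigma> (enum F1 x)) (permute_list \<tau> ys))"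
    by (rule sum.swap)
  also have "\<dots> = (\<Sum>\<tau>\<in>PK k. \<Sum>\<sigma>\<in>PK k. G (permute_list \<sigma> xs) (permute_list \<tau> ys))"
    by (rule sum.cong[OF refl], rule perm_sum_inv[where G="\<lambda>l. G l _"]) (use l1 assms in auto)
  also have "\<dots> = (\<Sum>\<sigma>\<in>PK k. \<Sum>\<tau>\<in>PK k. G (permute_list \<sigma> xs) (permute_list \<tau> ys))"
    by (rule sum.swap)
  finally show ?thesis .
qed

lemma tendsto_dist_le:
  assumes "\<And>n. dist (f n) l \<le> dist (g n) m" "g \<longlonglongrightarrow> m"
  shows "f \<longlonglongrightarrow> l"
proof -
  have 0: "(\<lambda>n. dist (g n) m) \<longlonglongrightarrow> 0" using assms(2) by (rule tendsto_dist_iff[THEN iffD1])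
  have "(\<lambda>n. dist (f n) l) \<longlonglongrightarrow> 0"
  proof (rule tendsto_sandwich[of "\<lambda>_. 0" _ _ "\<lambda>n. dist (g n) m"])
    show "\<forall>\<^sub>F n in sequentially. 0 \<le> dist (f n) l" by simp
    show "\<forall>\<^sub>F n in sequentially. dist (f n) l \<le> dist (g n) m" using assms(1) by simp
  qed (use 0 in auto)
  then show ?thesis by (rule tendsto_dist_iff[THEN iffD2])
qed

lemma Sym_cont:
  assumes ics1: "is_ICS k F1" and ics2: "is_ICS k F2" and G: "seqcont k G"
  shows "isCont (Sym k F1 F2 G) x"
  unfolding continuous_at_sequentially
proof (intro allI impI)
  fix u assume u: "u \<longlonglongrightarrow> x"
  let ?e1 = "enum F1 x" and ?e2 = "enum F2 x"
  have "\<forall>n. \<exists>zs. mset zs = F1 (u n) \<and> (\<forall>i<k. dist (zs!i) (?e1!i) \<le> dist (u n) x)"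
    using ics_align[OF ics1 mset_enum[of F1 x]] by blast
  from choice[OF this] obtain zs where zs0: "\<forall>n. mset (zs n) = F1 (u n) \<and> (\<forall>i<k. dist (zs n!i) (?e1!i) \<le> dist (u n) x)"
    by blast
  have zs: "\<And>n. mset (zs n) = F1 (u n)" "\<And>n i. i<k \<Longrightarrow> dist (zs n!i) (?e1!i) \<le> dist (u n) x"
    using zs0 by auto
  have "\<forall>n. \<exists>ws. mset ws = F2 (u n) \<and> (\<forall>i<k. dist (ws!i) (?e2!i) \<le> dist (u n) x)"
    using ics_align[OF ics2 mset_enum[of F2 x]] by blast
  from choice[OF this] obtain ws where ws0: "\<forall>n. mset (ws n) = F2 (u n) \<and> (\<forall>i<k. dist (ws n!i) (?e2!i) \<le> dist (u n) x)"
    by blast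
  have ws: "\<And>n. mset (ws n) = F2 (u n)" "\<And>n i. i<k \<Longrightarrow> dist (ws n!i) (?e2!i) \<le> dist (u n) x"
    using ws0 by auto
  have lz: "length (zs n) = k" for n using zs(1) ics1 by (metis ics_size size_mset)
  have lw: "length (ws n) = k" for n using ws(1) ics2 by (metis ics_size size_mset)
  have l1: "length ?e1 = k" using length_enum[OF ics1] .
  have l2: "length ?e2 = k" using length_enum[OF ics2] .
  have cz: "(\<lambda>n. zs n ! i) \<longlonglongrightarrow> ?e1 ! i" if "i < k" for i
    by (rule tendsto_dist_le[OF _ u]) (use zs(2) that in auto)
  have cw: "(\<lambda>n. ws n ! i) \<longlonglongrightarrow> ?e2 ! i" if "i < k" for i
    by (rule tendsto_dist_le[OF _ u]) (use ws(2) that in auto)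
  have eq: "(Sym k F1 F2 G \<circ> u) = (\<lambda>n. \<Sum>\<sigma>\<in>PK k. \<Sum>\<tau>\<in>PK k. G (permute_list \<sigma> (zs n)) (permute_list \<tau> (ws n)))"
    by (rule ext) (simp add: Sym_any[OF ics1 ics2 zs(1) ws(1)])
  have "(\<lambda>n. \<Sum>\<sigma>\<in>PK k. \<Sum>\<tau>\<in>PK k. G (permute_list \<sigma> (zs n)) (permute_list \<tau> (ws n)))
        \<longlonglongrightarrow> (\<Sum>\<sigma>\<in>PK k. \<Sum>\<tau>\<in>PK k. G (permute_list \<sigma> ?e1) (permute_list \<tau> ?e2))"
  proof (intro tendsto_sum)
    fix \<sigma> \<tau> assume s: "\<sigma> \<in> PK k" and t: "\<tau> \<in> PK k"
    have sk: "\<sigma> permutes {..<k}" "\<tau> permutes {..<k}" using s t unfolding PK_def by auto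
    show "(\<lambda>n. G (permute_list \<sigma> (zs n)) (permute_list \<tau> (ws n)))
        \<longlonglongrightarrow> G (permute_list \<sigma> ?e1) (permute_list \<tau> ?e2)"
    proof (rule seqcontD[OF G])
      fix j assume j: "j < k"
      have "\<sigma> j < k" "\<tau> j < k" using permutes_in_image[OF sk(1)] permutes_in_image[OF sk(2)] j by auto
      then show "(\<lambda>n. permute_list \<sigma> (zs n) ! j) \<longlonglongrightarrow> permute_list \<sigma> ?e1 ! j"
        "(\<lambda>n. permute_list \<tau> (ws n) ! j) \<longlonglongrightarrow> permute_list \<tau> ?e2 ! j"
        using cz cw j sk lz lw l1 l2 by (simp_all add: permute_list_nth)
    qed (use lz lw l1 l2 in auto)
  qed
  then show "(Sym k F1 F2 G \<circ> u) \<longlonglongrightarrow> Sym k F1 F2 G x"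
    unfolding eq Sym_def .
qed


definition pp :: "('a \<Rightarrow> real) \<Rightarrow> 'a list \<Rightarrow> nat \<Rightarrow> real" where
  "pp A a j = exp (A (a!j))"

definition mn :: "('a \<Rightarrow> real) \<Rightarrow> ('a \<Rightarrow> real) \<Rightarrow> 'a list \<Rightarrow> 'a list \<Rightarrow> nat \<Rightarrow> real" where
  "mn A1 A2 a b j = min (pp A1 a j) (pp A2 b j)"

definition R1 where "R1 A1 A2 k a b = (\<Sum>j<k. pp A1 a j - mn A1 A2 a b j)"
definition R2 where "R2 A1 A2 k a b = (\<Sum>j<k. pp A2 b j - mn A1 A2 a b j)"
definition sd where "sd A1 A2 k a b = max (R1 A1 A2 k a b) (R2 A1 A2 k a b)"

definition cpl :: "('a \<Rightarrow> real) \<Rightarrow> ('a \<Rightarrow> real) \<Rightarrow> nat \<Rightarrow> 'a list \<Rightarrow> 'a list \<Rightarrow> (('a \<times> 'a) \<times> real) list" where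
  "cpl A1 A2 k a b = map (\<lambda>j. ((a!j, b!j), mn A1 A2 a b j)) [0..<k] @
     concat (map (\<lambda>i. map (\<lambda>l. ((a!i, b!l),
        (pp A1 a i - mn A1 A2 a b i) * (pp A2 b l - mn A1 A2 a b l) / sd A1 A2 k a b)) [0..<k]) [0..<k])"

definition cint :: "('b \<times> real) list \<Rightarrow> ('b \<Rightarrow> real) \<Rightarrow> real" where
  "cint L h = sum_list (map (\<lambda>z. snd z * h (fst z)) L)"

lemma cint_append[simp]: "cint (L @ M) h = cint L h + cint M h"
  by (simp add: cint_def)

lemma cint_concat: "cint (concat Ls) h = sum_list (map (\<lambda>L. cint L h) Ls)"
  by (induction Ls) (simp_all add: cint_def)

lemma sum_list_upt_k: "sum_list (map f [0..<k]) = (\<Sum>j<k. f j)"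
  by (simp add: sum_list_sum_nth atLeast0LessThan)

lemma pp_pos: "pp A a j > 0" by (simp add: pp_def)
lemma mn_nonneg: "mn A1 A2 a b j \<ge> 0" by (simp add: mn_def pp_def)
lemma mn_le1: "mn A1 A2 a b j \<le> pp A1 a j" by (simp add: mn_def)
lemma mn_le2: "mn A1 A2 a b j \<le> pp A2 b j" by (simp add: mn_def)
lemma R1_nonneg: "R1 A1 A2 k a b \<ge> 0" unfolding R1_def by (intro sum_nonneg) (simp add: mn_le1)
lemma R2_nonneg: "R2 A1 A2 k a b \<ge> 0" unfolding R2_def by (intro sum_nonneg) (simp add: mn_le2)

lemma cint_cpl:
  "cint (cpl A1 A2 k a b) h = (\<Sum>j<k. mn A1 A2 a b j * h (a!j, b!j)) +
     (\<Sum>i<k. \<Sum>l<k. (pp A1 a i - mn A1 A2 a b i) * (pp A2 b l - mn A1 A2 a b l) * h (a!i, b!l)) / sd A1 A2 k a b"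
  unfolding cpl_def cint_append cint_concat
  by (simp add: cint_def sum_list_upt_k o_def sum_divide_distrib)

lemma cpl_nonneg: "z \<in> set (cpl A1 A2 k a b) \<Longrightarrow> snd z \<ge> 0"
  unfolding cpl_def using mn_nonneg[of A1 A2 a b] mn_le1[of A1 A2 a b] mn_le2[of A1 A2 a b]
    R1_nonneg[of A1 A2 k a b] R2_nonneg[of A1 A2 k a b]
  by (auto simp: sd_def intro!: divide_nonneg_nonneg mult_nonneg_nonneg)

lemma R1_eq_R2:
  assumes "(\<Sum>j<k. pp A1 a j) = 1" "(\<Sum>j<k. pp A2 b j) = 1"
  shows "R1 A1 A2 k a b = R2 A1 A2 k a b"
  using assms by (simp add: R1_def R2_def sum_subtractf)

lemma cint_cpl_fst:
  assumes n: "(\<Sum>j<k. pp A1 a j) = 1" "(\<Sum>j<k. pp A2 b j) = 1"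
  shows "cint (cpl A1 A2 k a b) (\<lambda>z. \<phi> (fst z)) = (\<Sum>j<k. pp A1 a j * \<phi> (a!j))"
proof -
  let ?m = "mn A1 A2 a b" and ?p = "pp A1 a" and ?q = "pp A2 b"
  have eqR: "R1 A1 A2 k a b = R2 A1 A2 k a b" using R1_eq_R2[OF n] .
  have sdR: "sd A1 A2 k a b = R2 A1 A2 k a b" unfolding sd_def using eqR by simp
  have dbl: "(\<Sum>i<k. \<Sum>l<k. (?p i - ?m i) * (?q l - ?m l) * \<phi> (a!i))
      = (\<Sum>i<k. (?p i - ?m i) * \<phi> (a!i)) * R2 A1 A2 k a b"
    unfolding R2_def sum_product by (intro sum.cong refl) (simp add: mult_ac)
  show ?thesis
  proof (cases "R2 A1 A2 k a b = 0")
    case True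
    then have "R1 A1 A2 k a b = 0" using eqR by simp
    then have "\<forall>j\<in>{..<k}. ?p j - ?m j = 0"
      unfolding R1_def by (subst sum_nonneg_eq_0_iff[symmetric]) (auto simp: mn_le1)
    then have "?m j = ?p j" if "j < k" for j using that by auto
    then show ?thesis unfolding cint_cpl using True sdR by (simp add: dbl)
  next
    case False
    have "cint (cpl A1 A2 k a b) (\<lambda>z. \<phi> (fst z)) = (\<Sum>j<k. ?m j * \<phi> (a!j)) + (\<Sum>i<k. (?p i - ?m i) * \<phi> (a!i))"
      unfolding cint_cpl using False sdR by (simp add: dbl)
    also have "\<dots> = (\<Sum>j<k. ?p j * \<phi> (a!j))" by (simp add: sum.distrib[symmetric] algebra_simps)
    finally show ?thesis .
  qed
qed

lemma cint_cpl_snd: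
  assumes n: "(\<Sum>j<k. pp A1 a j) = 1" "(\<Sum>j<k. pp A2 b j) = 1"
  shows "cint (cpl A1 A2 k a b) (\<lambda>z. \<phi> (snd z)) = (\<Sum>j<k. pp A2 b j * \<phi> (b!j))"
proof -
  let ?m = "mn A1 A2 a b" and ?p = "pp A1 a" and ?q = "pp A2 b"
  have eqR: "R1 A1 A2 k a b = R2 A1 A2 k a b" using R1_eq_R2[OF n] .
  have sdR: "sd A1 A2 k a b = R1 A1 A2 k a b" unfolding sd_def using eqR by simp
  have dbl: "(\<Sum>i<k. \<Sum>l<k. (?p i - ?m i) * (?q l - ?m l) * \<phi> (b!l))
      = R1 A1 A2 k a b * (\<Sum>l<k. (?q l - ?m l) * \<phi> (b!l))"
    unfolding R1_def sum_product by (intro sum.cong refl) (simp add: mult_ac)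
  show ?thesis
  proof (cases "R1 A1 A2 k a b = 0")
    case True
    then have "R2 A1 A2 k a b = 0" using eqR by simp
    then have "\<forall>j\<in>{..<k}. ?q j - ?m j = 0"
      unfolding R2_def by (subst sum_nonneg_eq_0_iff[symmetric]) (auto simp: mn_le2)
    then have "?m j = ?q j" if "j < k" for j using that by auto
    then show ?thesis unfolding cint_cpl using True sdR by (simp add: dbl)
  next
    case False
    have "cint (cpl A1 A2 k a b) (\<lambda>z. \<phi> (snd z)) = (\<Sum>j<k. ?m j * \<phi> (b!j)) + (\<Sum>l<k. (?q l - ?m l) * \<phi> (b!l))"
      unfolding cint_cpl using False sdR by (simp add: dbl)
    also have "\<dots> = (\<Sum>j<k. ?q j * \<phi> (b!j))" by (simp add: sum.distrib[symmetric] algebra_simps)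
    finally show ?thesis .
  qed
qed


definition Dm :: "nat \<Rightarrow> 'a::metric_space list \<Rightarrow> 'a list \<Rightarrow> real" where
  "Dm k a b = Max (insert 0 ((\<lambda>j. dist (a!j) (b!j)) ` {..<k}))"

lemma Dm_ge: "j < k \<Longrightarrow> dist (a!j) (b!j) \<le> Dm k a b"
  unfolding Dm_def by (intro Max_ge) auto

lemma Dm_nonneg: "0 \<le> Dm k a b"
  unfolding Dm_def by (intro Max_ge) auto

lemma exp_min_bound: "exp (s::real) - min (exp s) (exp t) \<le> exp s * \<bar>s - t\<bar>"
proof (cases "s \<le> t")
  case True then have "exp s \<le> exp t" by (simp only: exp_le_cancel_iff)
  then show ?thesis by (simp add: min_absorb1)
next
  case False
  have "1 + (t - s) \<le> exp (t - s)" by (rule exp_ge_add_one_self)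
  then have "1 - exp (t - s) \<le> s - t" by linarith
  then have "exp s * (1 - exp (t - s)) \<le> exp s * (s - t)" by (rule mult_left_mono) simp
  moreover have "exp s * exp (t - s) = exp t" by (simp add: exp_add[symmetric])
  ultimately show ?thesis using False by (simp add: algebra_simps)
qed

lemma cost_cpl:
  fixes a b :: "'a::metric_space list"
  assumes n: "(\<Sum>j<k. pp A1 a j) = 1" "(\<Sum>j<k. pp A2 b j) = 1"
    and Dd: "\<And>y z::'a. dist y z \<le> Dd" and S: "\<And>y. \<bar>A1 y - A2 y\<bar> \<le> S"
    and L: "\<And>y z. \<bar>A2 y - A2 z\<bar> \<le> L * dist y z" and L0: "0 \<le> L"
  shows "cint (cpl A1 A2 k a b) (\<lambda>z. dist (fst z) (snd z)) \<le> Dd * S + (L * Dd + 1) * Dm k a b"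
proof -
  let ?m = "mn A1 A2 a b" and ?p = "pp A1 a" and ?q = "pp A2 b" and ?D = "Dm k a b"
  have Dd0: "0 \<le> Dd" using Dd[of undefined undefined] by simp
  have T1: "(\<Sum>j<k. ?m j * dist (a!j) (b!j)) \<le> ?D"
  proof -
    have "(\<Sum>j<k. ?m j * dist (a!j) (b!j)) \<le> (\<Sum>j<k. ?p j * ?D)"
      by (intro sum_mono mult_mono) (auto simp: mn_le1 mn_nonneg Dm_ge Dm_nonneg less_imp_le[OF pp_pos])
    also have "\<dots> = ?D" using n(1) by (simp add: sum_distrib_right[symmetric])
    finally show ?thesis by simp
  qed
  have R1b: "R1 A1 A2 k a b \<le> S + L * ?D"
  proof -
    have "R1 A1 A2 k a b \<le> (\<Sum>j<k. ?p j * (S + L * ?D))"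
      unfolding R1_def
    proof (intro sum_mono)
      fix j assume "j \<in> {..<k}"
      then have j: "j < k" by simp
      have "?p j - ?m j \<le> ?p j * \<bar>A1 (a!j) - A2 (b!j)\<bar>"
        unfolding mn_def pp_def by (rule exp_min_bound)
      also have "\<bar>A1 (a!j) - A2 (b!j)\<bar> \<le> \<bar>A1 (a!j) - A2 (a!j)\<bar> + \<bar>A2 (a!j) - A2 (b!j)\<bar>" by simp
      also have "\<dots> \<le> S + L * ?D"
        using S[of "a!j"] L[of "a!j" "b!j"] mult_left_mono[OF Dm_ge[OF j, of a b] L0] by linarith
      finally show "?p j - ?m j \<le> ?p j * (S + L * ?D)"
        using pp_pos[of A1 a j] by (simp add: mult_left_mono)
    qed
    also have "\<dots> = S + L * ?D" using n(1) by (simp add: sum_distrib_right[symmetric])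
    finally show ?thesis .
  qed
  have T2: "(\<Sum>i<k. \<Sum>l<k. (?p i - ?m i) * (?q l - ?m l) * dist (a!i) (b!l)) / sd A1 A2 k a b
      \<le> Dd * R1 A1 A2 k a b"
  proof (cases "sd A1 A2 k a b = 0")
    case True then show ?thesis using Dd0 R1_nonneg[of A1 A2 k a b] by simp
  next
    case False
    have sdp: "0 < sd A1 A2 k a b" using False R1_nonneg[of A1 A2 k a b] unfolding sd_def by linarith
    have "(\<Sum>i<k. \<Sum>l<k. (?p i - ?m i) * (?q l - ?m l) * dist (a!i) (b!l))
        \<le> (\<Sum>i<k. \<Sum>l<k. ((?p i - ?m i) * Dd) * (?q l - ?m l))"
    proof (intro sum_mono)
      fix i l
      have "0 \<le> (?p i - ?m i) * (?q l - ?m l)" by (simp add: mn_le1 mn_le2)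
      then have "((?p i - ?m i) * (?q l - ?m l)) * dist (a!i) (b!l) \<le> ((?p i - ?m i) * (?q l - ?m l)) * Dd"
        by (rule mult_left_mono[OF Dd])
      then show "(?p i - ?m i) * (?q l - ?m l) * dist (a!i) (b!l) \<le> ((?p i - ?m i) * Dd) * (?q l - ?m l)"
        by (simp add: mult_ac)
    qed
    also have "\<dots> = Dd * R1 A1 A2 k a b * R2 A1 A2 k a b"
      unfolding R1_def R2_def sum_product[symmetric] by (simp add: sum_distrib_left[symmetric] mult_ac)
    also have "\<dots> \<le> Dd * R1 A1 A2 k a b * sd A1 A2 k a b"
      using Dd0 R1_nonneg[of A1 A2 k a b] by (intro mult_left_mono) (auto simp: sd_def)
    finally show ?thesis using sdp by (simp add: divide_le_eq)
  qed
  have "cint (cpl A1 A2 k a b) (\<lambda>z. dist (fst z) (snd z)) \<le> ?D + Dd * R1 A1 A2 k a b"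
    unfolding cint_cpl using T1 T2 by (simp add: case_prod_unfold)
  also have "\<dots> \<le> ?D + Dd * (S + L * ?D)" using R1b Dd0 by (simp add: mult_left_mono)
  also have "\<dots> = Dd * S + (L * Dd + 1) * ?D" by (simp add: algebra_simps)
  finally show ?thesis .
qed


lemma Max_tendsto:
  assumes "finite I" "\<And>i. i \<in> I \<Longrightarrow> (\<lambda>n. f n i) \<longlonglongrightarrow> g i"
  shows "(\<lambda>n. Max (insert (0::real) (f n ` I))) \<longlonglongrightarrow> Max (insert 0 (g ` I))"
  using assms
proof (induction I rule: finite_induct)
  case empty then show ?case by simp
next
  case (insert i I)
  have eq: "Max (insert 0 (h ` insert i I)) = max (h i) (Max (insert 0 (h ` I)))" for h :: "_ \<Rightarrow> real"
  proof -
    have "insert 0 (h ` insert i I) = insert (h i) (insert 0 (h ` I))" by auto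
    then show ?thesis using insert(1) by (simp add: Max_insert)
  qed
  show ?case unfolding eq
    by (intro tendsto_max insert) auto
qed

lemma seqcont_mult:
  assumes G: "seqcont k G" and H: "seqcont k H"
  shows "seqcont k (\<lambda>a b. G a b * H a b)"
  unfolding seqcont_def
proof (intro allI impI)
  fix a b :: "'a list" and an bn :: "nat \<Rightarrow> 'a list"
  assume A: "length a = k" "length b = k"
    "\<forall>n. length (an n) = k \<and> length (bn n) = k" "\<forall>j<k. (\<lambda>n. an n ! j) \<longlonglongrightarrow> a ! j"
    "\<forall>j<k. (\<lambda>n. bn n ! j) \<longlonglongrightarrow> b ! j"
  have "(\<lambda>n. G (an n) (bn n)) \<longlonglongrightarrow> G a b" using G A unfolding seqcont_def by blast
  moreover have "(\<lambda>n. H (an n) (bn n)) \<longlonglongrightarrow> H a b" using H A unfolding seqcont_def by blast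
  ultimately show "(\<lambda>n. G (an n) (bn n) * H (an n) (bn n)) \<longlonglongrightarrow> G a b * H a b"
    by (rule tendsto_mult)
qed

lemma seqcont_const: "seqcont k (\<lambda>a b. c)"
  unfolding seqcont_def by simp

lemma Dm_tendsto:
  assumes "\<And>j. j<k \<Longrightarrow> (\<lambda>n. an n ! j) \<longlonglongrightarrow> (a ! j :: 'a::metric_space)"
    "\<And>j. j<k \<Longrightarrow> (\<lambda>n. bn n ! j) \<longlonglongrightarrow> b ! j"
  shows "(\<lambda>n. Dm k (an n) (bn n)) \<longlonglongrightarrow> Dm k a b"
  unfolding Dm_def by (intro Max_tendsto tendsto_dist assms) auto

definition wt :: "nat \<Rightarrow> real \<Rightarrow> 'a::metric_space list \<Rightarrow> 'a list \<Rightarrow> real" where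
  "wt k c0 a b = max 0 (c0 - Dm k a b)"

lemma wt_nonneg: "0 \<le> wt k c0 a b" by (simp add: wt_def)

lemma seqcont_wt: "seqcont k (wt k c0)"
  unfolding seqcont_def wt_def
proof (intro allI impI)
  fix a b :: "'a list" and an bn :: "nat \<Rightarrow> 'a list"
  assume "\<forall>j<k. (\<lambda>n. an n ! j) \<longlonglongrightarrow> a ! j" "\<forall>j<k. (\<lambda>n. bn n ! j) \<longlonglongrightarrow> b ! j"
  then have "(\<lambda>n. Dm k (an n) (bn n)) \<longlonglongrightarrow> Dm k a b" by (intro Dm_tendsto) auto
  then show "(\<lambda>n. max 0 (c0 - Dm k (an n) (bn n))) \<longlonglongrightarrow> max 0 (c0 - Dm k a b)"
    by (intro tendsto_max tendsto_diff tendsto_const)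
qed

lemma tendsto_div_max:
  fixes Nn Rn Sn :: "nat \<Rightarrow> real"
  assumes N: "Nn \<longlonglongrightarrow> N" and R: "Rn \<longlonglongrightarrow> R" and S: "Sn \<longlonglongrightarrow> S"
    and nn: "\<And>n. 0 \<le> Rn n" "\<And>n. 0 \<le> Sn n"
    and bnd: "\<And>n. \<bar>Nn n\<bar> \<le> B * Rn n * Sn n" and B: "0 \<le> B"
  shows "(\<lambda>n. Nn n / max (Rn n) (Sn n)) \<longlonglongrightarrow> N / max R S"
proof -
  have R0: "0 \<le> R" by (rule LIMSEQ_le_const[OF R]) (use nn in auto)
  have S0: "0 \<le> S" by (rule LIMSEQ_le_const[OF S]) (use nn in auto)
  show ?thesis
  proof (cases "max R S = 0")
    case False
    then show ?thesis by (intro tendsto_divide tendsto_max N R S)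
  next
    case True
    then have RS: "R = 0" "S = 0" using R0 S0 by auto
    have BR: "(\<lambda>n. B * Rn n) \<longlonglongrightarrow> 0" using tendsto_mult[OF tendsto_const R, of B] RS by simp
    have le: "\<bar>Nn n / max (Rn n) (Sn n)\<bar> \<le> B * Rn n" for n
    proof (cases "max (Rn n) (Sn n) = 0")
      case True then show ?thesis using B nn by simp
    next
      case False
      then have mp: "0 < max (Rn n) (Sn n)" using nn[of n] by linarith
      have "B * Rn n * Sn n \<le> B * Rn n * max (Rn n) (Sn n)"
        by (rule mult_left_mono) (use B nn[of n] in auto)
      then have "\<bar>Nn n\<bar> \<le> B * Rn n * max (Rn n) (Sn n)" using bnd[of n] by linarith
      then have "\<bar>Nn n\<bar> / max (Rn n) (Sn n) \<le> B * Rn n" using mp by (simp only: pos_divide_le_eq)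
      moreover have "\<bar>Nn n / max (Rn n) (Sn n)\<bar> = \<bar>Nn n\<bar> / max (Rn n) (Sn n)"
        using mp by (metis abs_divide abs_of_pos)
      ultimately show ?thesis by (simp only:)
    qed
    have "(\<lambda>n. Nn n / max (Rn n) (Sn n)) \<longlonglongrightarrow> 0"
    proof (rule tendsto_sandwich[of "\<lambda>n. - (B * Rn n)" _ _ "\<lambda>n. B * Rn n"])
      have "- (B * Rn n) \<le> Nn n / max (Rn n) (Sn n) \<and> Nn n / max (Rn n) (Sn n) \<le> B * Rn n" for n
        using le[of n] unfolding abs_le_iff by linarith
      then show "\<forall>\<^sub>F n in sequentially. - (B * Rn n) \<le> Nn n / max (Rn n) (Sn n)"
        "\<forall>\<^sub>F n in sequentially. Nn n / max (Rn n) (Sn n) \<le> B * Rn n"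
        by (simp_all add: always_eventually)
      show "(\<lambda>n. - (B * Rn n)) \<longlonglongrightarrow> 0" using tendsto_minus[OF BR] by simp
    qed (rule BR)
    then show ?thesis using True by simp
  qed
qed

lemma seqcont_cpl:
  fixes h :: "'a::metric_space \<times> 'a \<Rightarrow> real"
  assumes cA1: "continuous_on UNIV A1" and cA2: "continuous_on UNIV A2"
    and ch: "continuous_on UNIV h" and hB: "\<And>z. \<bar>h z\<bar> \<le> B"
  shows "seqcont k (\<lambda>a b. cint (cpl A1 A2 k a b) h)"
  unfolding seqcont_def
proof (intro allI impI)
  fix a b :: "'a list" and an bn :: "nat \<Rightarrow> 'a list"
  assume ca: "\<forall>j<k. (\<lambda>n. an n ! j) \<longlonglongrightarrow> a ! j" and cb: "\<forall>j<k. (\<lambda>n. bn n ! j) \<longlonglongrightarrow> b ! j"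
  have iA1: "isCont A1 x" for x using cA1 by (simp add: continuous_on_eq_continuous_at)
  have iA2: "isCont A2 x" for x using cA2 by (simp add: continuous_on_eq_continuous_at)
  have ih: "isCont h x" for x using ch continuous_on_eq_continuous_at[OF open_UNIV, of h] by blast
  have B0: "0 \<le> B" using hB[of undefined] by simp
  have p: "(\<lambda>n. pp A1 (an n) j) \<longlonglongrightarrow> pp A1 a j" if "j < k" for j
    unfolding pp_def using ca that by (intro tendsto_exp isCont_tendsto_compose[OF iA1]) auto
  have q: "(\<lambda>n. pp A2 (bn n) j) \<longlonglongrightarrow> pp A2 b j" if "j < k" for j
    unfolding pp_def using cb that by (intro tendsto_exp isCont_tendsto_compose[OF iA2]) auto
  have m: "(\<lambda>n. mn A1 A2 (an n) (bn n) j) \<longlonglongrightarrow> mn A1 A2 a b j" if "j < k" for j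
    unfolding mn_def using p q that by (intro tendsto_min) auto
  have hc: "(\<lambda>n. h (an n ! i, bn n ! l)) \<longlonglongrightarrow> h (a ! i, b ! l)" if "i < k" "l < k" for i l
    using ca cb that by (intro isCont_tendsto_compose[OF ih] tendsto_Pair) auto
  have first: "(\<lambda>n. \<Sum>j<k. mn A1 A2 (an n) (bn n) j * h (an n ! j, bn n ! j))
      \<longlonglongrightarrow> (\<Sum>j<k. mn A1 A2 a b j * h (a ! j, b ! j))"
    using m hc by (intro tendsto_sum tendsto_mult) auto
  let ?N = "\<lambda>a b. (\<Sum>i<k. \<Sum>l<k. (pp A1 a i - mn A1 A2 a b i) * (pp A2 b l - mn A1 A2 a b l) * h (a!i, b!l))"
  have Nc: "(\<lambda>n. ?N (an n) (bn n)) \<longlonglongrightarrow> ?N a b"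
    using m hc p q by (intro tendsto_sum tendsto_mult tendsto_diff) auto
  have R1c: "(\<lambda>n. R1 A1 A2 k (an n) (bn n)) \<longlonglongrightarrow> R1 A1 A2 k a b"
    unfolding R1_def using m p by (intro tendsto_sum tendsto_diff) auto
  have R2c: "(\<lambda>n. R2 A1 A2 k (an n) (bn n)) \<longlonglongrightarrow> R2 A1 A2 k a b"
    unfolding R2_def using m q by (intro tendsto_sum tendsto_diff) auto
  have Nb: "\<bar>?N a' b'\<bar> \<le> B * R1 A1 A2 k a' b' * R2 A1 A2 k a' b'" for a' b'
  proof -
    have "\<bar>?N a' b'\<bar> \<le> (\<Sum>i<k. \<Sum>l<k. \<bar>(pp A1 a' i - mn A1 A2 a' b' i) * (pp A2 b' l - mn A1 A2 a' b' l) * h (a'!i, b'!l)\<bar>)"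
      by (rule order_trans[OF sum_abs sum_mono]) (rule sum_abs)
    also have "\<dots> \<le> (\<Sum>i<k. \<Sum>l<k. (B * (pp A1 a' i - mn A1 A2 a' b' i)) * (pp A2 b' l - mn A1 A2 a' b' l))"
    proof (intro sum_mono)
      fix i l
      have X: "0 \<le> (pp A1 a' i - mn A1 A2 a' b' i) * (pp A2 b' l - mn A1 A2 a' b' l)"
        by (simp add: mn_le1 mn_le2)
      have "\<bar>(pp A1 a' i - mn A1 A2 a' b' i) * (pp A2 b' l - mn A1 A2 a' b' l) * h (a'!i, b'!l)\<bar>
          = ((pp A1 a' i - mn A1 A2 a' b' i) * (pp A2 b' l - mn A1 A2 a' b' l)) * \<bar>h (a'!i, b'!l)\<bar>"
        using mn_le1[of A1 A2 a' b' i] mn_le2[of A1 A2 a' b' l] by (simp add: abs_mult)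
      also have "\<dots> \<le> ((pp A1 a' i - mn A1 A2 a' b' i) * (pp A2 b' l - mn A1 A2 a' b' l)) * B"
        by (rule mult_left_mono[OF hB X])
      finally show "\<bar>(pp A1 a' i - mn A1 A2 a' b' i) * (pp A2 b' l - mn A1 A2 a' b' l) * h (a'!i, b'!l)\<bar>
          \<le> (B * (pp A1 a' i - mn A1 A2 a' b' i)) * (pp A2 b' l - mn A1 A2 a' b' l)"
        by (simp add: mult_ac)
    qed
    also have "\<dots> = B * R1 A1 A2 k a' b' * R2 A1 A2 k a' b'"
      unfolding R1_def R2_def sum_product[symmetric] by (simp add: sum_distrib_left[symmetric] mult_ac)
    finally show ?thesis .
  qed
  have second: "(\<lambda>n. ?N (an n) (bn n) / sd A1 A2 k (an n) (bn n)) \<longlonglongrightarrow> ?N a b / sd A1 A2 k a b"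
    unfolding sd_def
    by (rule tendsto_div_max[OF Nc R1c R2c R1_nonneg R2_nonneg Nb B0])
  show "(\<lambda>n. cint (cpl A1 A2 k (an n) (bn n)) h) \<longlonglongrightarrow> cint (cpl A1 A2 k a b) h"
    unfolding cint_cpl by (intro tendsto_add first second)
qed


definition PL :: "nat \<Rightarrow> (nat \<Rightarrow> nat) list" where
  "PL k = (SOME l. set l = PK k \<and> distinct l)"

lemma PL: "set (PL k) = PK k" "distinct (PL k)"
proof -
  have "\<exists>l. set l = PK k \<and> distinct l" by (rule finite_distinct_list) simp
  then have "set (PL k) = PK k \<and> distinct (PL k)" unfolding PL_def by (rule someI_ex)
  then show "set (PL k) = PK k" "distinct (PL k)" by auto
qed

lemma sum_list_PLPL:
  "sum_list (map f (List.product (PL k) (PL k))) = (\<Sum>\<sigma>\<in>PK k. \<Sum>\<tau>\<in>PK k. f (\<sigma>, \<tau>))"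
proof -
  have "sum_list (map f (List.product (PL k) (PL k))) = sum f (set (List.product (PL k) (PL k)))"
    by (rule sum_list_distinct_conv_sum_set) (simp add: distinct_product PL)
  also have "\<dots> = sum f (PK k \<times> PK k)" by (simp add: PL)
  also have "\<dots> = (\<Sum>\<sigma>\<in>PK k. \<Sum>\<tau>\<in>PK k. f (\<sigma>, \<tau>))" by (simp add: sum.cartesian_product)
  finally show ?thesis .
qed

lemma cint_scale: "cint (map (\<lambda>z. (fst z, c * snd z)) L) h = c * cint L h"
  by (induction L) (simp_all add: cint_def algebra_simps)

lemma cint_one: "sum_list (map snd L) = cint L (\<lambda>_. 1)"
  by (simp add: cint_def)

lemma pp_sum_mset:
  assumes "length l = k"
  shows "(\<Sum>j<k. pp A l j * \<phi> (l!j)) = (\<Sum>y\<in>#mset l. exp (A y) * \<phi> y)"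
proof -
  have "(\<Sum>y\<in>#mset l. exp (A y) * \<phi> y) = sum_list (map (\<lambda>y. exp (A y) * \<phi> y) l)"
    by (simp add: sum_mset_sum_list[symmetric])
  also have "\<dots> = (\<Sum>j<length l. exp (A (l!j)) * \<phi> (l!j))"
    by (simp add: sum_list_sum_nth atLeast0LessThan)
  finally show ?thesis using assms by (simp add: pp_def)
qed

locale sys =
  fixes k :: nat and F1 F2 :: "'a::metric_space \<Rightarrow> 'a multiset" and A1 A2 :: "'a \<Rightarrow> real"
    and c0 e0 :: real
  assumes cpt: "compact (UNIV :: 'a set)" and ics1: "is_ICS k F1" and ics2: "is_ICS k F2"
    and cA1: "continuous_on UNIV A1" and cA2: "continuous_on UNIV A2"
    and nA1: "normalized A1 F1" and nA2: "normalized A2 F2"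
    and e0: "0 < e0"
    and good: "\<And>x. \<exists>\<sigma>\<in>PK k. \<exists>\<tau>\<in>PK k.
        Dm k (permute_list \<sigma> (enum F1 x)) (permute_list \<tau> (enum F2 x)) \<le> c0 - e0"
begin

abbreviation "a1 \<sigma> x \<equiv> permute_list \<sigma> (enum F1 x)"
abbreviation "b2 \<tau> x \<equiv> permute_list \<tau> (enum F2 x)"

definition W :: "'a \<Rightarrow> real" where "W x = Sym k F1 F2 (wt k c0) x"

definition KL :: "'a \<Rightarrow> (('a \<times> 'a) \<times> real) list" where
  "KL x = concat (map (\<lambda>st. map (\<lambda>z. (fst z, wt k c0 (a1 (fst st) x) (b2 (snd st) x) / W x * snd z))
     (cpl A1 A2 k (a1 (fst st) x) (b2 (snd st) x))) (List.product (PL k) (PL k)))"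

lemma len_a1: "\<sigma> \<in> PK k \<Longrightarrow> length (a1 \<sigma> x) = k"
  using length_enum[OF ics1] by simp
lemma len_b2: "\<tau> \<in> PK k \<Longrightarrow> length (b2 \<tau> x) = k"
  using length_enum[OF ics2] by simp

lemma mset_a1: "\<sigma> \<in> PK k \<Longrightarrow> mset (a1 \<sigma> x) = F1 x"
  using length_enum[OF ics1, of x] unfolding PK_def by simp
lemma mset_b2: "\<tau> \<in> PK k \<Longrightarrow> mset (b2 \<tau> x) = F2 x"
  using length_enum[OF ics2, of x] unfolding PK_def by simp

lemma trans1: "\<sigma> \<in> PK k \<Longrightarrow> (\<Sum>j<k. pp A1 (a1 \<sigma> x) j * \<phi> (a1 \<sigma> x ! j)) = transfer_op F1 A1 \<phi> x"
  using pp_sum_mset[of "a1 \<sigma> x" k A1 \<phi>] len_a1[of \<sigma> x] mset_a1[of \<sigma> x] by (simp add: transfer_op_def)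
lemma trans2: "\<tau> \<in> PK k \<Longrightarrow> (\<Sum>j<k. pp A2 (b2 \<tau> x) j * \<phi> (b2 \<tau> x ! j)) = transfer_op F2 A2 \<phi> x"
  using pp_sum_mset[of "b2 \<tau> x" k A2 \<phi>] len_b2[of \<tau> x] mset_b2[of \<tau> x] by (simp add: transfer_op_def)

lemma transfer_one1: "transfer_op F1 A1 (\<lambda>_. 1) x = 1"
  using nA1 unfolding normalized_def transfer_op_def by simp
lemma transfer_one2: "transfer_op F2 A2 (\<lambda>_. 1) x = 1"
  using nA2 unfolding normalized_def transfer_op_def by simp

lemma norm1: "\<sigma> \<in> PK k \<Longrightarrow> (\<Sum>j<k. pp A1 (a1 \<sigma> x) j) = 1"
  using trans1[of \<sigma> x "\<lambda>_. 1"] transfer_one1 by simp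
lemma norm2: "\<tau> \<in> PK k \<Longrightarrow> (\<Sum>j<k. pp A2 (b2 \<tau> x) j) = 1"
  using trans2[of \<tau> x "\<lambda>_. 1"] transfer_one2 by simp

lemma W_ge: "e0 \<le> W x"
proof -
  obtain \<sigma> \<tau> where st: "\<sigma> \<in> PK k" "\<tau> \<in> PK k" and D: "Dm k (a1 \<sigma> x) (b2 \<tau> x) \<le> c0 - e0"
    using good[of x] by blast
  have "e0 \<le> wt k c0 (a1 \<sigma> x) (b2 \<tau> x)" using D by (simp add: wt_def)
  also have "\<dots> \<le> (\<Sum>\<tau>'\<in>PK k. wt k c0 (a1 \<sigma> x) (b2 \<tau>' x))"
    by (rule member_le_sum) (use st wt_nonneg in auto)
  also have "\<dots> \<le> W x" unfolding W_def Sym_def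
    by (rule member_le_sum[where f="\<lambda>\<sigma>. \<Sum>\<tau>'\<in>PK k. wt k c0 (a1 \<sigma> x) (b2 \<tau>' x)"])
       (use st in \<open>auto intro!: sum_nonneg wt_nonneg\<close>)
  finally show ?thesis .
qed

lemma W_pos: "0 < W x" using W_ge[of x] e0 by linarith

lemma cint_KL:
  "cint (KL x) h = Sym k F1 F2 (\<lambda>a b. wt k c0 a b * cint (cpl A1 A2 k a b) h) x / W x"
proof -
  have "cint (KL x) h = (\<Sum>\<sigma>\<in>PK k. \<Sum>\<tau>\<in>PK k. wt k c0 (a1 \<sigma> x) (b2 \<tau> x) / W x * cint (cpl A1 A2 k (a1 \<sigma> x) (b2 \<tau> x)) h)"
    unfolding KL_def cint_concat map_map o_def cint_scale by (subst sum_list_PLPL) simp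
  also have "\<dots> = Sym k F1 F2 (\<lambda>a b. wt k c0 a b * cint (cpl A1 A2 k a b) h) x / W x"
    unfolding Sym_def sum_divide_distrib by (intro sum.cong refl) simp
  finally show ?thesis .
qed

lemma Sym_const_mult:
  assumes "\<And>\<sigma> \<tau>. \<sigma> \<in> PK k \<Longrightarrow> \<tau> \<in> PK k \<Longrightarrow> G (a1 \<sigma> x) (b2 \<tau> x) = c"
  shows "Sym k F1 F2 (\<lambda>a b. wt k c0 a b * G a b) x = W x * c"
  unfolding W_def Sym_def sum_distrib_right using assms by (intro sum.cong refl) simp

lemma KL_fst: "cint (KL x) (\<lambda>z. \<phi> (fst z)) = transfer_op F1 A1 \<phi> x"
proof -
  have "Sym k F1 F2 (\<lambda>a b. wt k c0 a b * cint (cpl A1 A2 k a b) (\<lambda>z. \<phi> (fst z))) x = W x * transfer_op F1 A1 \<phi> x"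
    by (rule Sym_const_mult) (simp add: cint_cpl_fst norm1 norm2 trans1)
  then show ?thesis unfolding cint_KL using W_pos[of x] by simp
qed

lemma KL_snd: "cint (KL x) (\<lambda>z. \<phi> (snd z)) = transfer_op F2 A2 \<phi> x"
proof -
  have "Sym k F1 F2 (\<lambda>a b. wt k c0 a b * cint (cpl A1 A2 k a b) (\<lambda>z. \<phi> (snd z))) x = W x * transfer_op F2 A2 \<phi> x"
    by (rule Sym_const_mult) (simp add: cint_cpl_snd norm1 norm2 trans2)
  then show ?thesis unfolding cint_KL using W_pos[of x] by simp
qed

lemma KL_wf: "pmf_of_list_wf (KL x)"
proof (rule pmf_of_list_wfI)
  fix c assume "c \<in> set (map snd (KL x))"
  then obtain st z where z: "z \<in> set (cpl A1 A2 k (a1 (fst st) x) (b2 (snd st) x))"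
    and c: "c = wt k c0 (a1 (fst st) x) (b2 (snd st) x) / W x * snd z"
    unfolding KL_def by auto
  have "0 \<le> W x" using W_pos[of x] by simp
  then show "0 \<le> c" unfolding c
    by (intro mult_nonneg_nonneg divide_nonneg_nonneg wt_nonneg cpl_nonneg[OF z])
next
  show "sum_list (map snd (KL x)) = 1"
    unfolding cint_one using KL_fst[where \<phi>="\<lambda>_. 1" and x=x] transfer_one1[of x] by simp
qed

lemma KL_cost:
  assumes Dd: "\<And>y z::'a. dist y z \<le> Dd" and S: "\<And>y. \<bar>A1 y - A2 y\<bar> \<le> S"
    and L: "\<And>y z. \<bar>A2 y - A2 z\<bar> \<le> L * dist y z" and L0: "0 \<le> L"
  shows "cint (KL x) (\<lambda>z. dist (fst z) (snd z)) \<le> Dd * S + (L * Dd + 1) * c0"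
proof -
  have Dd0: "0 \<le> Dd" using Dd[of undefined undefined] by simp
  let ?B = "Dd * S + (L * Dd + 1) * c0"
  have "Sym k F1 F2 (\<lambda>a b. wt k c0 a b * cint (cpl A1 A2 k a b) (\<lambda>z. dist (fst z) (snd z))) x
     \<le> Sym k F1 F2 (\<lambda>a b. wt k c0 a b * ?B) x"
    unfolding Sym_def
  proof (intro sum_mono)
    fix \<sigma> \<tau> assume st: "\<sigma> \<in> PK k" "\<tau> \<in> PK k"
    let ?a = "a1 \<sigma> x" and ?b = "b2 \<tau> x"
    show "wt k c0 ?a ?b * cint (cpl A1 A2 k ?a ?b) (\<lambda>z. dist (fst z) (snd z)) \<le> wt k c0 ?a ?b * ?B"
    proof (cases "wt k c0 ?a ?b = 0")
      case False
      then have "Dm k ?a ?b \<le> c0" unfolding wt_def by linarith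
      then have "(L * Dd + 1) * Dm k ?a ?b \<le> (L * Dd + 1) * c0"
        using L0 Dd0 by (intro mult_left_mono) auto
      then have "cint (cpl A1 A2 k ?a ?b) (\<lambda>z. dist (fst z) (snd z)) \<le> ?B"
        using cost_cpl[OF norm1[OF st(1), of x] norm2[OF st(2), of x] Dd S L L0] by linarith
      then show ?thesis by (rule mult_left_mono) (rule wt_nonneg)
    qed simp
  qed
  also have "\<dots> = W x * ?B" by (rule Sym_const_mult) simp
  finally show ?thesis unfolding cint_KL using W_pos[of x] by (simp add: divide_le_eq mult.commute)
qed

lemma KL_cont:
  assumes ch: "continuous_on UNIV h" and hB: "\<And>z. \<bar>h z\<bar> \<le> B"
  shows "isCont (\<lambda>x. cint (KL x) h) x"
  unfolding cint_KL W_def[symmetric]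
proof (rule isCont_divide)
  show "isCont (Sym k F1 F2 (\<lambda>a b. wt k c0 a b * cint (cpl A1 A2 k a b) h)) x"
    by (rule Sym_cont[OF ics1 ics2 seqcont_mult[OF seqcont_wt seqcont_cpl[OF cA1 cA2 ch hB]]])
  show "isCont W x" unfolding W_def[abs_def] by (rule Sym_cont[OF ics1 ics2 seqcont_wt])
  show "W x \<noteq> 0" using W_pos[of x] by simp
qed

end


lemma finite_net:
  assumes cpt: "compact (UNIV :: 'a::metric_space set)" and r: "0 < r"
  shows "\<exists>T::'a set. finite T \<and> T \<noteq> {} \<and> (\<forall>y. \<exists>c\<in>T. dist y c < r)"
proof -
  have cover: "UNIV \<subseteq> (\<Union>c\<in>UNIV. ball (c::'a) r)"
  proof (rule subsetI)
    fix y :: 'a assume "y \<in> UNIV"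
    show "y \<in> (\<Union>c\<in>UNIV. ball c r)" using r by (intro UN_I[of y]) auto
  qed
  have ex: "\<exists>C'. finite C' \<and> UNIV \<subseteq> (\<Union>c\<in>C'. ball (c::'a) r)"
  proof (rule compactE_image[OF cpt _ cover])
    fix T :: 'a assume "T \<in> UNIV" show "open (ball T r)" by (rule open_ball)
  next
    fix C' :: "'a set" assume H: "C' \<subseteq> UNIV" "finite C'" "UNIV \<subseteq> (\<Union>c\<in>C'. ball c r)"
    show "\<exists>C'. finite C' \<and> UNIV \<subseteq> (\<Union>c\<in>C'. ball (c::'a) r)"
      by (rule exI[of _ C'], rule conjI[OF H(2) H(3)])
  qed
  then obtain C' :: "'a set" where C': "finite C'" "UNIV \<subseteq> (\<Union>c\<in>C'. ball c r)" by blast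
  have "\<exists>c\<in>C'. dist y c < r" for y
  proof -
    from C'(2) obtain c where "c \<in> C'" "y \<in> ball c r" by blast
    then have "dist c y < r" by simp
    then have "dist y c < r" by (simp only: dist_commute)
    then show ?thesis using \<open>c \<in> C'\<close> by blast
  qed
  moreover have "C' \<noteq> {}" using C'(2) by blast
  ultimately show ?thesis using C'(1) by blast
qed

lemma dist_meas:
  assumes cpt: "compact (UNIV :: 'a::metric_space set)"
  shows "(\<lambda>z::'a\<times>'a. dist (fst z) (snd z)) \<in> borel_measurable (borel \<Otimes>\<^sub>M borel)"
proof -
  have "\<forall>n. \<exists>T::'a set. finite T \<and> T \<noteq> {} \<and> (\<forall>y. \<exists>c\<in>T. dist y c < inverse (real (Suc n)))"
    using finite_net[OF cpt] by simp
  from choice[OF this] obtain T :: "nat \<Rightarrow> 'a set" where T: "\<And>n. finite (T n)" "\<And>n. T n \<noteq> {}"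
    "\<And>n y. \<exists>c\<in>T n. dist y c < inverse (real (Suc n))" by blast
  define g where "g n z = Min ((\<lambda>c. dist (fst z) c + dist c (snd z)) ` T n)" for n and z :: "'a \<times> 'a"
  have dc: "(\<lambda>y::'a. dist y c) \<in> borel_measurable borel" for c
    by (rule borel_measurable_continuous_onI) (intro continuous_intros)
  have dc2: "(\<lambda>y::'a. dist c y) \<in> borel_measurable borel" for c
    by (rule borel_measurable_continuous_onI) (intro continuous_intros)
  have gm: "g n \<in> borel_measurable (borel \<Otimes>\<^sub>M borel)" for n
    unfolding g_def
  proof (rule borel_measurable_Min[OF T(1)])
    fix c assume "c \<in> T n"
    have "(\<lambda>z::'a\<times>'a. dist (fst z) c) \<in> borel_measurable (borel \<Otimes>\<^sub>M borel)"
      by (rule measurable_compose[OF measurable_fst dc])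
    moreover have "(\<lambda>z::'a\<times>'a. dist c (snd z)) \<in> borel_measurable (borel \<Otimes>\<^sub>M borel)"
      by (rule measurable_compose[OF measurable_snd dc2])
    ultimately show "(\<lambda>z. dist (fst z) c + dist c (snd z)) \<in> borel_measurable (borel \<Otimes>\<^sub>M borel)"
      by (rule borel_measurable_add)
  qed
  have lo: "dist (fst z) (snd z) \<le> g n z" for n z
    unfolding g_def
  proof (rule Min.boundedI)
    show "finite ((\<lambda>c. dist (fst z) c + dist c (snd z)) ` T n)" using T(1) by simp
    show "(\<lambda>c. dist (fst z) c + dist c (snd z)) ` T n \<noteq> {}" using T(2) by simp
    fix a assume "a \<in> (\<lambda>c. dist (fst z) c + dist c (snd z)) ` T n"
    then obtain c where "a = dist (fst z) c + dist c (snd z)" by blast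
    then show "dist (fst z) (snd z) \<le> a" using dist_triangle[of "fst z" "snd z" c] by simp
  qed
  have hi: "g n z \<le> dist (fst z) (snd z) + 2 * inverse (real (Suc n))" for n z
  proof -
    obtain c where c: "c \<in> T n" "dist (fst z) c < inverse (real (Suc n))" using T(3) by blast
    have "g n z \<le> dist (fst z) c + dist c (snd z)" unfolding g_def using T(1) c(1) by (intro Min_le) auto
    also have "dist c (snd z) \<le> dist c (fst z) + dist (fst z) (snd z)" by (rule dist_triangle)
    finally show ?thesis using c(2) by (simp add: dist_commute)
  qed
  have lim: "(\<lambda>n. g n z) \<longlonglongrightarrow> dist (fst z) (snd z)" for z
  proof (rule tendsto_sandwich[of "\<lambda>_. dist (fst z) (snd z)" _ _ "\<lambda>n. dist (fst z) (snd z) + 2 * inverse (real (Suc n))"])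
    show "\<forall>\<^sub>F n in sequentially. dist (fst z) (snd z) \<le> g n z" using lo by simp
    show "\<forall>\<^sub>F n in sequentially. g n z \<le> dist (fst z) (snd z) + 2 * inverse (real (Suc n))" using hi by simp
    have l2: "(\<lambda>n. 2 * inverse (real (Suc n))) \<longlonglongrightarrow> 2 * 0"
      by (rule tendsto_mult[OF tendsto_const LIMSEQ_inverse_real_of_nat])
    show "(\<lambda>n. dist (fst z) (snd z) + 2 * inverse (real (Suc n))) \<longlonglongrightarrow> dist (fst z) (snd z)"
      using tendsto_add[OF tendsto_const[of "dist (fst z) (snd z)"] l2] by simp
  qed simp
  show ?thesis by (rule borel_measurable_LIMSEQ_real[OF lim gm])
qed

lemma cont_bound:
  assumes cpt: "compact (UNIV :: 'b::metric_space set)" and h: "continuous_on UNIV (h :: 'b \<Rightarrow> real)"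
  shows "\<exists>B. \<forall>z. \<bar>h z\<bar> \<le> B"
proof -
  have "compact (h ` UNIV)" by (rule compact_continuous_image[OF h cpt])
  then have "bounded (h ` UNIV)" by (rule compact_imp_bounded)
  then obtain B where "\<forall>x\<in>h ` UNIV. norm x \<le> B" unfolding bounded_iff by blast
  then show ?thesis by auto
qed

lemma cpt_prod: "compact (UNIV :: 'a::metric_space set) \<Longrightarrow> compact (UNIV :: ('a \<times> 'a) set)"
  using compact_Times[of "UNIV::'a set" "UNIV::'a set"] by simp

definition appr :: "'a::metric_space set \<Rightarrow> nat \<Rightarrow> 'a \<Rightarrow> real" where
  "appr U n y = (if U = UNIV then 1 else min 1 (real n * infdist y (- U)))"

lemma appr_cont: "continuous_on UNIV (appr U n)"
  unfolding appr_def[abs_def] by (cases "U = UNIV") (simp_all add: continuous_intros)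

lemma appr_bound: "0 \<le> appr U n y" "appr U n y \<le> 1"
  unfolding appr_def by (auto simp: infdist_nonneg)

lemma appr_lim:
  assumes U: "open U"
  shows "(\<lambda>n. appr U n y) \<longlonglongrightarrow> indicator U y"
proof (cases "U = UNIV")
  case True then show ?thesis by (simp add: appr_def)
next
  case notU: False
  show ?thesis
  proof (cases "y \<in> U")
    case True
    have "0 < infdist y (- U)"
      using U notU True by (intro infdist_pos_not_in_closed) auto
    then obtain N :: nat where N: "inverse (infdist y (- U)) < real N" using reals_Archimedean2 by blast
    have "appr U n y = 1" if "n \<ge> N" for n
    proof -
      have "1 < real N * infdist y (- U)" using N \<open>0 < infdist y (- U)\<close> by (simp add: field_simps)
      also have "\<dots> \<le> real n * infdist y (- U)" using that \<open>0 < infdist y (- U)\<close> by (intro mult_right_mono) auto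
      finally show ?thesis using notU by (simp add: appr_def)
    qed
    then have "\<forall>\<^sub>F n in sequentially. appr U n y = 1" by (auto simp: eventually_sequentially)
    then show ?thesis using True by (simp add: tendsto_eventually)
  next
    case False
    then have "appr U n y = 0" for n using notU by (simp add: appr_def)
    then show ?thesis using False by simp
  qed
qed

lemma meas_eq_cont:
  fixes M N :: "'a::metric_space measure"
  assumes cpt: "compact (UNIV :: 'a set)" and fM: "finite_measure M" and fN: "finite_measure N"
    and sM: "sets M = sets borel" and sN: "sets N = sets borel"
    and eq: "\<And>\<phi>. continuous_on UNIV \<phi> \<Longrightarrow> integral\<^sup>L M \<phi> = integral\<^sup>L N (\<phi> :: 'a \<Rightarrow> real)"
  shows "M = N"
proof (rule measure_eqI_generator_eq[where E="{S. open S}" and \<Omega>=UNIV and A="\<lambda>_. UNIV"])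
  show "Int_stable {S::'a set. open S}" by (auto simp: Int_stable_def)
  show "sets M = sigma_sets UNIV {S. open S}" using sM sets_borel by simp
  show "sets N = sigma_sets UNIV {S. open S}" using sN sets_borel by simp
  show "emeasure M UNIV \<noteq> \<infinity>" for i :: nat using fM by (simp add: finite_measure.emeasure_finite)
  have spM: "space M = UNIV" using sets_eq_imp_space_eq[OF sM] by simp
  have spN: "space N = UNIV" using sets_eq_imp_space_eq[OF sN] by simp
  fix X :: "'a set" assume "X \<in> {S. open S}"
  then have X: "open X" by simp
  have lim: "(\<lambda>n. integral\<^sup>L P (appr X n)) \<longlonglongrightarrow> integral\<^sup>L P (indicator X)"
    if fP: "finite_measure P" and sP: "sets P = sets borel" for P :: "'a measure"
  proof (rule integral_dominated_convergence[where w="\<lambda>_. 1"])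
    show "indicator X \<in> borel_measurable P"
      using X sP by (intro borel_measurable_indicator) (simp add: borel_open)
    show "appr X n \<in> borel_measurable P" for n
      using borel_measurable_continuous_onI[OF appr_cont] measurable_cong_sets[OF sP refl] by blast
    show "integrable P (\<lambda>_. 1::real)" using fP by (simp add: finite_measure.integrable_const)
    show "AE x in P. (\<lambda>n. appr X n x) \<longlonglongrightarrow> indicator X x" using appr_lim[OF X] by simp
    have "norm (appr X n x) \<le> 1" for n x using appr_bound[of X n x] by simp
    then show "AE x in P. norm (appr X n x) \<le> 1" for n by simp
  qed
  have "integral\<^sup>L M (indicator X :: 'a \<Rightarrow> real) = integral\<^sup>L N (indicator X)"
  proof (rule LIMSEQ_unique[OF lim[OF fM sM]])
    have "integral\<^sup>L M (appr X n) = integral\<^sup>L N (appr X n)" for n by (rule eq[OF appr_cont])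
    then show "(\<lambda>n. integral\<^sup>L M (appr X n)) \<longlonglongrightarrow> integral\<^sup>L N (indicator X)" using lim[OF fN sN] by simp
  qed
  then have "measure M X = measure N X" using spM spN by simp
  moreover have "X \<in> sets M" "X \<in> sets N" using X sM sN by (auto simp: borel_open)
  ultimately show "emeasure M X = emeasure N X"
    using fM fN by (simp add: finite_measure.emeasure_eq_measure)
qed auto


lemma cint_filter: "sum_list (map snd (filter (\<lambda>z. fst z \<in> A) L)) = cint L (indicator A)"
  by (induction L) (auto simp: cint_def)

lemma cint_filter_eq_aux:
  assumes "finite A" "fst ` set L \<subseteq> A"
  shows "(\<Sum>a\<in>A. f a * sum_list (map snd (filter (\<lambda>z. fst z = a) L))) = cint L f"
  using assms(2)
proof (induction L)
  case Nil then show ?case by (simp add: cint_def)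
next
  case (Cons z L)
  have IH: "(\<Sum>a\<in>A. f a * sum_list (map snd (filter (\<lambda>z. fst z = a) L))) = cint L f"
    using Cons by simp
  have zA: "fst z \<in> A" using Cons.prems by simp
  have "(\<Sum>a\<in>A. f a * sum_list (map snd (filter (\<lambda>z. fst z = a) (z # L))))
      = (\<Sum>a\<in>A. (if fst z = a then f a * snd z else 0) + f a * sum_list (map snd (filter (\<lambda>z. fst z = a) L)))"
    by (intro sum.cong refl) (simp add: distrib_left)
  also have "\<dots> = f (fst z) * snd z + cint L f"
    using zA assms(1) by (simp add: sum.distrib IH sum.delta)
  finally show ?case by (simp add: cint_def)
qed

lemma int_pmf_of_list:
  assumes wf: "pmf_of_list_wf L"
  shows "integral\<^sup>L (measure_pmf (pmf_of_list L)) f = cint L (f :: 'a \<Rightarrow> real)"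
proof -
  have "integral\<^sup>L (measure_pmf (pmf_of_list L)) f = (\<Sum>a\<in>fst ` set L. f a * pmf (pmf_of_list L) a)"
    by (rule integral_measure_pmf_real) (use set_pmf_of_list[OF wf] in auto)
  also have "\<dots> = (\<Sum>a\<in>fst ` set L. f a * sum_list (map snd (filter (\<lambda>z. fst z = a) L)))"
    by (simp add: pmf_pmf_of_list[OF wf])
  also have "\<dots> = cint L f" by (rule cint_filter_eq_aux) auto
  finally show ?thesis .
qed

lemma cint_tendsto:
  assumes "\<And>z. (\<lambda>n. h n z) \<longlonglongrightarrow> h' z"
  shows "(\<lambda>n. cint L (h n)) \<longlonglongrightarrow> cint L h'"
proof (induction L)
  case Nil then show ?case by (simp add: cint_def)
next
  case (Cons z L)
  have "(\<lambda>n. snd z * h n (fst z) + cint L (h n)) \<longlonglongrightarrow> snd z * h' (fst z) + cint L h'"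
    by (rule tendsto_add[OF tendsto_mult[OF tendsto_const assms] Cons])
  then show ?case by (simp add: cint_def)
qed

lemma indicator_times_split: "indicator (a \<times> b) z = indicator a (fst z) * (indicator b (snd z) :: real)"
  by (cases z) (simp add: indicator_def)

lemma sets_pair_open:
  "sets (borel \<Otimes>\<^sub>M borel :: ('a::topological_space \<times> 'a) measure) =
     sigma_sets UNIV {a \<times> b | a b. open a \<and> open b}"
proof -
  have "sets (borel \<Otimes>\<^sub>M borel :: ('a \<times> 'a) measure) =
     sets (sigma (space borel \<times> space borel) {a \<times> b | a b. a \<in> {S::'a set. open S} \<and> b \<in> {S::'a set. open S}})"
    by (rule sets_pair_eq[where Ca="{UNIV}" and Cb="{UNIV}"]) (auto simp: sets_borel)
  also have "\<dots> = sigma_sets UNIV {a \<times> b | a b. open a \<and> open b}"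
    by (subst sets_measure_of) auto
  finally show ?thesis .
qed

context sys
begin

definition K :: "'a \<Rightarrow> ('a \<times> 'a) measure" where
  "K x = distr (measure_pmf (pmf_of_list (KL x))) (borel \<Otimes>\<^sub>M borel) id"

lemma sets_K[simp]: "sets (K x) = sets (borel \<Otimes>\<^sub>M borel)"
  by (simp add: K_def)

lemma space_K[simp]: "space (K x) = UNIV"
  using sets_eq_imp_space_eq[OF sets_K[of x]] by (simp add: space_pair_measure)

lemma prob_K: "prob_space (K x)"
  unfolding K_def by (rule prob_space.prob_space_distr[OF prob_space_measure_pmf]) (simp add: space_pair_measure)

lemma integral_K:
  assumes "f \<in> borel_measurable (borel \<Otimes>\<^sub>M borel)"
  shows "integral\<^sup>L (K x) f = cint (KL x) f"
  unfolding K_def by (subst integral_distr) (simp_all add: assms int_pmf_of_list[OF KL_wf] space_pair_measure)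

lemma emeasure_K:
  assumes "A \<in> sets (borel \<Otimes>\<^sub>M borel)"
  shows "emeasure (K x) A = ennreal (cint (KL x) (indicator A))"
proof -
  have "emeasure (K x) A = emeasure (measure_pmf (pmf_of_list (KL x))) (id -` A \<inter> space (measure_pmf (pmf_of_list (KL x))))"
    unfolding K_def using assms by (intro emeasure_distr) (simp_all add: space_pair_measure)
  also have "\<dots> = ennreal (cint (KL x) (indicator A))"
    by (simp add: emeasure_pmf_of_list[OF KL_wf] cint_filter)
  finally show ?thesis .
qed

lemma KL_meas:
  assumes sM: "sets M = sets (borel :: 'a measure)" and ch: "continuous_on UNIV h" and hB: "\<And>z. \<bar>h z\<bar> \<le> B"
  shows "(\<lambda>x. cint (KL x) h) \<in> borel_measurable M"
proof -
  have "continuous_on UNIV (\<lambda>x. cint (KL x) h)"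
    using KL_cont[OF ch hB] by (simp add: continuous_on_eq_continuous_at)
  then have "(\<lambda>x. cint (KL x) h) \<in> borel_measurable borel" by (rule borel_measurable_continuous_onI)
  then show ?thesis using measurable_cong_sets[OF sM refl] by blast
qed

lemma K_meas:
  assumes sM: "sets M = sets (borel :: 'a measure)"
  shows "K \<in> measurable M (subprob_algebra (borel \<Otimes>\<^sub>M borel))"
proof (rule measurable_subprob_algebra_generated[where \<Omega>=UNIV and G="{a \<times> b | a b. open a \<and> open b}"])
  show "sets (borel \<Otimes>\<^sub>M borel) = sigma_sets UNIV {a \<times> b | a b. open (a::'a set) \<and> open (b::'a set)}"
    by (rule sets_pair_open)
  show "Int_stable {a \<times> b | a b. open (a::'a set) \<and> open (b::'a set)}"
  proof (rule Int_stableI)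
    fix X Y assume "X \<in> {a \<times> b | a b. open (a::'a set) \<and> open (b::'a set)}" "Y \<in> {a \<times> b | a b. open (a::'a set) \<and> open (b::'a set)}"
    then obtain a b c d :: "'a set" where "X = a \<times> b" "Y = c \<times> d" "open a" "open b" "open c" "open d" by blast
    then show "X \<inter> Y \<in> {a \<times> b | a b. open (a::'a set) \<and> open (b::'a set)}"
      by (intro CollectI exI[of _ "a \<inter> c"] exI[of _ "b \<inter> d"]) (auto simp: open_Int)
  qed
  show "{a \<times> b | a b. open (a::'a set) \<and> open (b::'a set)} \<subseteq> Pow UNIV" by simp
  show "subprob_space (K a)" for a by (rule prob_space_imp_subprob_space[OF prob_K])
  show "sets (K a) = sets (borel \<Otimes>\<^sub>M borel)" for a by simp
  have "emeasure (K x) UNIV = 1" for x using prob_space.emeasure_space_1[OF prob_K, of x] by simp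
  then show "(\<lambda>x. emeasure (K x) UNIV) \<in> borel_measurable M" by simp
  fix A assume "A \<in> {a \<times> b | a b. open (a::'a set) \<and> open (b::'a set)}"
  then obtain a b :: "'a set" where A: "A = a \<times> b" "open a" "open b" by blast
  have Ameas: "A \<in> sets (borel \<Otimes>\<^sub>M borel)" using A by (simp add: borel_open)
  define hn where "hn n z = appr a n (fst z) * appr b n (snd z)" for n and z :: "'a \<times> 'a"
  have hc: "continuous_on UNIV (hn n)" for n
  proof -
    have "continuous_on UNIV (\<lambda>z::'a\<times>'a. appr a n (fst z))"
      using continuous_on_compose[OF continuous_on_fst[OF continuous_on_id] appr_cont[of a n, THEN continuous_on_subset]]
      by (simp add: o_def)
    moreover have "continuous_on UNIV (\<lambda>z::'a\<times>'a. appr b n (snd z))"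
      using continuous_on_compose[OF continuous_on_snd[OF continuous_on_id] appr_cont[of b n, THEN continuous_on_subset]]
      by (simp add: o_def)
    ultimately show ?thesis unfolding hn_def[abs_def] by (rule continuous_on_mult)
  qed
  have hb: "\<bar>hn n z\<bar> \<le> 1" for n z
    unfolding hn_def using appr_bound[of a n "fst z"] appr_bound[of b n "snd z"]
    by (simp add: abs_mult mult_le_one)
  have lim: "(\<lambda>n. cint (KL x) (hn n)) \<longlonglongrightarrow> cint (KL x) (indicator A)" for x
  proof (rule cint_tendsto)
    fix z :: "'a \<times> 'a"
    show "(\<lambda>n. hn n z) \<longlonglongrightarrow> indicator A z"
      unfolding hn_def A(1) indicator_times_split
      by (rule tendsto_mult[OF appr_lim[OF A(2)] appr_lim[OF A(3)]])
  qed
  have "(\<lambda>x. cint (KL x) (indicator A)) \<in> borel_measurable M"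
    by (rule borel_measurable_LIMSEQ_real[OF lim KL_meas[OF sM hc hb]])
  then have "(\<lambda>x. ennreal (cint (KL x) (indicator A))) \<in> borel_measurable M"
    by (rule measurable_compose[OF _ measurable_ennreal])
  then show "(\<lambda>x. emeasure (K x) A) \<in> borel_measurable M"
    by (simp add: emeasure_K[OF Ameas])
qed

end


lemma cint_nonneg: "(\<And>z. z \<in> set L \<Longrightarrow> 0 \<le> snd z) \<Longrightarrow> (\<And>z. 0 \<le> h z) \<Longrightarrow> 0 \<le> cint L h"
  unfolding cint_def by (induction L) auto

context sys
begin

lemma coupling_bound:
  fixes \<mu> \<nu>1 \<nu>2 :: "'a measure"
  assumes pm: "prob_space \<mu>" and sm: "sets \<mu> = sets borel"
    and d1: "is_dual_transfer F1 A1 \<mu> \<nu>1" and d2: "is_dual_transfer F2 A2 \<mu> \<nu>2"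
    and Dd: "\<And>y z::'a. dist y z \<le> Dd" and S: "\<And>y. \<bar>A1 y - A2 y\<bar> \<le> S"
    and L: "\<And>y z. \<bar>A2 y - A2 z\<bar> \<le> L * dist y z" and L0: "0 \<le> L"
  shows "W1 \<nu>1 \<nu>2 \<le> Dd * S + (L * Dd + 1) * c0"
proof -
  let ?N = "borel \<Otimes>\<^sub>M borel :: ('a \<times> 'a) measure"
  define \<pi> where "\<pi> = \<mu> \<bind> K"
  have Km: "K \<in> measurable \<mu> (subprob_algebra ?N)" by (rule K_meas[OF sm])
  have spm: "space \<mu> = UNIV" using sets_eq_imp_space_eq[OF sm] by simp
  have ne: "space \<mu> \<noteq> {}" using spm by simp
  have fmu: "finite_measure \<mu>" using pm unfolding prob_space_def by blast
  have s\<pi>: "sets \<pi> = sets ?N" unfolding \<pi>_def by (rule sets_bind_measurable[OF Km ne])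
  have p\<pi>: "prob_space \<pi>" unfolding \<pi>_def
    by (rule prob_space.prob_space_bind[OF pm _ Km]) (intro AE_I2 prob_K)
  have intb: "integral\<^sup>L \<pi> f = (\<integral>x. cint (KL x) f \<partial>\<mu>)"
    if fm: "f \<in> borel_measurable ?N" and fb: "\<And>z. \<bar>f z\<bar> \<le> B" for f :: "'a \<times> 'a \<Rightarrow> real" and B
  proof -
    have "integral\<^sup>L \<pi> f = (\<integral>x. integral\<^sup>L (K x) f \<partial>\<mu>)"
      unfolding \<pi>_def
    proof (rule integral_bind[where B=B and B'=1])
      show "f \<in> borel_measurable ?N" by (rule fm)
      show "\<And>x. x \<in> space ?N \<Longrightarrow> \<bar>f x\<bar> \<le> B" using fb by simp
      show "K \<in> measurable \<mu> (subprob_algebra ?N)" by (rule Km)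
      show "finite_measure \<mu>" by (rule fmu)
      have "emeasure (K x) (space (K x)) \<le> ennreal 1" for x
        using prob_space.emeasure_space_1[OF prob_K, of x] by simp
      then show "AE x in \<mu>. emeasure (K x) (space (K x)) \<le> ennreal 1" by simp
    qed
    also have "\<dots> = (\<integral>x. cint (KL x) f \<partial>\<mu>)" by (simp add: integral_K[OF fm])
    finally show ?thesis .
  qed
  have fstm: "fst \<in> measurable \<pi> borel" using measurable_fst measurable_cong_sets[OF s\<pi> refl] by blast
  have sndm: "snd \<in> measurable \<pi> borel" using measurable_snd measurable_cong_sets[OF s\<pi> refl] by blast
  have marg1: "distr \<pi> borel fst = \<nu>1"
  proof (rule meas_eq_cont[OF cpt])
    show "finite_measure (distr \<pi> borel fst)"
      using prob_space.prob_space_distr[OF p\<pi> fstm] unfolding prob_space_def by blast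
    show "finite_measure \<nu>1" "sets \<nu>1 = sets borel" using d1 by (simp_all add: is_dual_transfer_def)
    show "sets (distr \<pi> borel fst) = sets borel" by simp
    fix \<phi> :: "'a \<Rightarrow> real" assume c\<phi>: "continuous_on UNIV \<phi>"
    obtain B where B: "\<And>y. \<bar>\<phi> y\<bar> \<le> B" using cont_bound[OF cpt c\<phi>] by blast
    have \<phi>m: "\<phi> \<in> borel_measurable borel" by (rule borel_measurable_continuous_onI[OF c\<phi>])
    have "integral\<^sup>L (distr \<pi> borel fst) \<phi> = integral\<^sup>L \<pi> (\<lambda>z. \<phi> (fst z))" by (rule integral_distr[OF fstm \<phi>m])
    also have "\<dots> = (\<integral>x. cint (KL x) (\<lambda>z. \<phi> (fst z)) \<partial>\<mu>)"
      by (rule intb[of _ B]) (use measurable_compose[OF measurable_fst \<phi>m] B in auto)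
    also have "\<dots> = (\<integral>x. transfer_op F1 A1 \<phi> x \<partial>\<mu>)" by (simp add: KL_fst)
    also have "\<dots> = integral\<^sup>L \<nu>1 \<phi>" using d1 c\<phi> unfolding is_dual_transfer_def by simp
    finally show "integral\<^sup>L (distr \<pi> borel fst) \<phi> = integral\<^sup>L \<nu>1 \<phi>" .
  qed
  have marg2: "distr \<pi> borel snd = \<nu>2"
  proof (rule meas_eq_cont[OF cpt])
    show "finite_measure (distr \<pi> borel snd)"
      using prob_space.prob_space_distr[OF p\<pi> sndm] unfolding prob_space_def by blast
    show "finite_measure \<nu>2" "sets \<nu>2 = sets borel" using d2 by (simp_all add: is_dual_transfer_def)
    show "sets (distr \<pi> borel snd) = sets borel" by simp
    fix \<phi> :: "'a \<Rightarrow> real" assume c\<phi>: "continuous_on UNIV \<phi>"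
    obtain B where B: "\<And>y. \<bar>\<phi> y\<bar> \<le> B" using cont_bound[OF cpt c\<phi>] by blast
    have \<phi>m: "\<phi> \<in> borel_measurable borel" by (rule borel_measurable_continuous_onI[OF c\<phi>])
    have "integral\<^sup>L (distr \<pi> borel snd) \<phi> = integral\<^sup>L \<pi> (\<lambda>z. \<phi> (snd z))" by (rule integral_distr[OF sndm \<phi>m])
    also have "\<dots> = (\<integral>x. cint (KL x) (\<lambda>z. \<phi> (snd z)) \<partial>\<mu>)"
      by (rule intb[of _ B]) (use measurable_compose[OF measurable_snd \<phi>m] B in auto)
    also have "\<dots> = (\<integral>x. transfer_op F2 A2 \<phi> x \<partial>\<mu>)" by (simp add: KL_snd)
    also have "\<dots> = integral\<^sup>L \<nu>2 \<phi>" using d2 c\<phi> unfolding is_dual_transfer_def by simp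
    finally show "integral\<^sup>L (distr \<pi> borel snd) \<phi> = integral\<^sup>L \<nu>2 \<phi>" .
  qed
  have cpl: "\<pi> \<in> couplings \<nu>1 \<nu>2" unfolding couplings_def using p\<pi> s\<pi> marg1 marg2 by blast
  let ?d = "\<lambda>z::'a\<times>'a. dist (fst z) (snd z)"
  let ?Bc = "Dd * S + (L * Dd + 1) * c0"
  have dm: "?d \<in> borel_measurable ?N" by (rule dist_meas[OF cpt])
  have dc: "continuous_on UNIV ?d" by (intro continuous_intros)
  have d0: "\<bar>?d z\<bar> \<le> Dd" for z using Dd by simp
  have c0: "0 \<le> cint (KL x) ?d" for x
    by (rule cint_nonneg) (use KL_wf[of x] in \<open>auto simp: pmf_of_list_wf_def\<close>)
  have cb: "cint (KL x) ?d \<le> ?Bc" for x by (rule KL_cost[OF Dd S L L0])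
  have "integral\<^sup>L \<pi> ?d = (\<integral>x. cint (KL x) ?d \<partial>\<mu>)" by (rule intb[OF dm d0])
  also have "\<dots> \<le> (\<integral>x. ?Bc \<partial>\<mu>)"
  proof (rule integral_mono)
    show "integrable \<mu> (\<lambda>x. cint (KL x) ?d)"
    proof (rule finite_measure.integrable_const_bound[OF fmu, where B="?Bc"])
      show "AE x in \<mu>. norm (cint (KL x) ?d) \<le> ?Bc" using c0 cb by simp
      show "(\<lambda>x. cint (KL x) ?d) \<in> borel_measurable \<mu>" by (rule KL_meas[OF sm dc d0])
    qed
    show "integrable \<mu> (\<lambda>x. ?Bc)" using fmu by (simp add: finite_measure.integrable_const)
    show "cint (KL x) ?d \<le> ?Bc" for x by (rule cb)
  qed
  also have "\<dots> = ?Bc" using prob_space.prob_space[OF pm] by simp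
  finally have cost: "integral\<^sup>L \<pi> ?d \<le> ?Bc" .
  have bdd: "bdd_below ((\<lambda>\<pi>. integral\<^sup>L \<pi> ?d) ` couplings \<nu>1 \<nu>2)"
    by (rule bdd_belowI[of _ 0]) (auto intro: Bochner_Integration.integral_nonneg)
  have "W1 \<nu>1 \<nu>2 \<le> integral\<^sup>L \<pi> ?d" unfolding W1_def by (rule cINF_lower[OF bdd cpl])
  then show ?thesis using cost by linarith
qed

end


lemma dinf_good:
  fixes F1 F2 :: "'a::metric_space \<Rightarrow> 'a multiset"
  assumes ics1: "is_ICS k F1" and ics2: "is_ICS k F2" and Dd: "\<And>y z::'a. dist y z \<le> Dd"
  shows "\<exists>\<sigma>\<in>PK k. \<exists>\<tau>\<in>PK k. Dm k (permute_list \<sigma> (enum F1 x)) (permute_list \<tau> (enum F2 x)) \<le> d_inf F1 F2"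
proof -
  define P where "P x = {(xs, ys). mset xs = F1 x \<and> mset ys = F2 x}" for x
  define val :: "'a list \<times> 'a list \<Rightarrow> real" where
    "val p = Max (insert 0 {dist (fst p ! j) (snd p ! j) | j. j < length (fst p)})" for p
  have dinf: "d_inf F1 F2 = (SUP x. INF p\<in>P x. val p)"
    unfolding d_inf_def P_def val_def by simp
  have setv: "{dist (fst p ! j) (snd p ! j) | j. j < length (fst p)} = (\<lambda>j. dist (fst p ! j) (snd p ! j)) ` {..<length (fst p)}" for p
    by auto
  have Dd0: "0 \<le> Dd" using Dd[of undefined undefined] by simp
  have valb: "val p \<le> Dd" for p unfolding val_def setv using Dd Dd0 by (subst Max_le_iff) auto
  have finP: "finite (P x)" for x
  proof -
    have "P x \<subseteq> {xs. set xs \<subseteq> set_mset (F1 x) \<and> length xs = size (F1 x)} \<times> {ys. set ys \<subseteq> set_mset (F2 x) \<and> length ys = size (F2 x)}"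
    proof (rule subsetI)
      fix p assume "p \<in> P x"
      then obtain a b where ab: "p = (a, b)" "mset a = F1 x" "mset b = F2 x" unfolding P_def by auto
      have "set a = set_mset (F1 x)" "length a = size (F1 x)" using ab(2) by (metis set_mset_mset, metis size_mset)
      moreover have "set b = set_mset (F2 x)" "length b = size (F2 x)" using ab(3) by (metis set_mset_mset, metis size_mset)
      ultimately show "p \<in> {xs. set xs \<subseteq> set_mset (F1 x) \<and> length xs = size (F1 x)} \<times> {ys. set ys \<subseteq> set_mset (F2 x) \<and> length ys = size (F2 x)}"
        using ab(1) by simp
    qed
    moreover have "finite ({xs. set xs \<subseteq> set_mset (F1 x) \<and> length xs = size (F1 x)} \<times> {ys. set ys \<subseteq> set_mset (F2 x) \<and> length ys = size (F2 x)})"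
      by (intro finite_cartesian_product finite_lists_length_eq) auto
    ultimately show ?thesis by (rule finite_subset)
  qed
  have neP: "(enum F1 x, enum F2 x) \<in> P x" for x unfolding P_def by simp
  have INFeq: "(INF p\<in>P x. val p) = Min (val ` P x)" for x
    using finP[of x] neP[of x] by (intro cInf_eq_Min) auto
  have "Min (val ` P x) \<in> val ` P x" using finP[of x] neP[of x] by (intro Min_in) auto
  then obtain p where pP: "p \<in> P x" and pv0: "Min (val ` P x) = val p" by (rule imageE)
  have pv: "val p = (INF p\<in>P x. val p)" using pv0 INFeq[of x] by simp
  have INFb: "(INF p\<in>P x'. val p) \<le> Dd" for x'
  proof -
    have "bdd_below (val ` P x')" using finP[of x'] by (intro bdd_below_finite finite_imageI)
    then have "(INF p\<in>P x'. val p) \<le> val (enum F1 x', enum F2 x')"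
      by (rule cINF_lower[OF _ neP])
    then show ?thesis using valb[of "(enum F1 x', enum F2 x')"] by linarith
  qed
  have "(INF p\<in>P x. val p) \<le> (SUP x. INF p\<in>P x. val p)"
  proof (rule cSUP_upper)
    show "bdd_above (range (\<lambda>x. INF p\<in>P x. val p))" by (rule bdd_aboveI2[where M=Dd]) (rule INFb)
  qed simp
  then have vle: "val p \<le> d_inf F1 F2" using pv dinf by simp
  obtain xs ys where p: "p = (xs, ys)" and xs: "mset xs = F1 x" and ys: "mset ys = F2 x"
    using pP unfolding P_def by (cases p) auto
  have l1: "length (enum F1 x) = k" by (rule length_enum[OF ics1])
  have l2: "length (enum F2 x) = k" by (rule length_enum[OF ics2])
  have "mset xs = mset (enum F1 x)" using xs by simp
  then obtain \<sigma> where \<sigma>: "\<sigma> permutes {..<length (enum F1 x)}" "permute_list \<sigma> (enum F1 x) = xs"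
    by (rule mset_eq_permutation)
  have "mset ys = mset (enum F2 x)" using ys by simp
  then obtain \<tau> where \<tau>: "\<tau> permutes {..<length (enum F2 x)}" "permute_list \<tau> (enum F2 x) = ys"
    by (rule mset_eq_permutation)
  have lxs: "length xs = k" using \<sigma>(2) l1 by auto
  have "Dm k xs ys = val p" unfolding Dm_def val_def p setv using lxs by simp
  then have "Dm k (permute_list \<sigma> (enum F1 x)) (permute_list \<tau> (enum F2 x)) \<le> d_inf F1 F2"
    using \<sigma>(2) \<tau>(2) vle by simp
  moreover have "\<sigma> \<in> PK k" using \<sigma>(1) l1 by (simp add: PK_def)
  moreover have "\<tau> \<in> PK k" using \<tau>(1) l2 by (simp add: PK_def)
  ultimately show ?thesis by blast
qed

theorem mainTheorem8:
  fixes F1 F2 :: "'a::metric_space \<Rightarrow> 'a multiset"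
    and A1 A2 :: "'a \<Rightarrow> real"
    and k :: nat
    and \<mu> \<nu>1 \<nu>2 :: "'a measure"
  assumes "compact (UNIV :: 'a set)"
    and "is_ICS k F1" and "is_ICS k F2"
    and "continuous_on UNIV A1"
    and "normalized A1 F1" and "normalized A2 F2"
    and "\<exists>C. lipschitz_on C UNIV A2"
    and "prob_space \<mu>" and "sets \<mu> = sets borel"
    and "is_dual_transfer F1 A1 \<mu> \<nu>1"
    and "is_dual_transfer F2 A2 \<mu> \<nu>2"
  shows "W1 \<nu>1 \<nu>2 \<le> diameter (UNIV :: 'a set) * sup_norm (\<lambda>x. A1 x - A2 x)
           + (Lip A2 * diameter (UNIV :: 'a set) + 1) * d_inf F1 F2"
proof -
  note cpt = assms(1)
  define Dd where "Dd = diameter (UNIV :: 'a set)"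
  define S where "S = sup_norm (\<lambda>x. A1 x - A2 x)"
  define L where "L = Lip A2"
  obtain C where C: "lipschitz_on C UNIV A2" using assms(7) by blast
  have cA2: "continuous_on UNIV A2" by (rule lipschitz_on_continuous_on[OF C])
  have bnd: "bounded (UNIV :: 'a set)" by (rule compact_imp_bounded[OF cpt])
  have Dd: "dist y z \<le> Dd" for y z :: 'a unfolding Dd_def by (rule diameter_bounded_bound[OF bnd]) auto
  have Dd0: "0 \<le> Dd" using Dd[of undefined undefined] by simp
  have Sb: "\<bar>A1 y - A2 y\<bar> \<le> S" for y
  proof -
    have cd: "continuous_on UNIV (\<lambda>x. A1 x - A2 x)" using assms(4) cA2 by (intro continuous_intros)
    obtain B where B: "\<And>x. \<bar>A1 x - A2 x\<bar> \<le> B" using cont_bound[OF cpt cd] by blast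
    show ?thesis unfolding S_def sup_norm_def
      by (rule cSUP_upper) (auto intro: bdd_aboveI2[where M=B] B)
  qed
  have CS: "C \<in> {C. lipschitz_on C UNIV A2}" using C by simp
  have bddC: "bdd_below {C. lipschitz_on C UNIV A2}"
    by (rule bdd_belowI[of _ 0]) (auto intro: lipschitz_on_nonneg)
  have L0: "0 \<le> L" unfolding L_def Lip_def
    by (rule cInf_greatest) (use CS in \<open>auto intro: lipschitz_on_nonneg\<close>)
  have Lb: "\<bar>A2 y - A2 z\<bar> \<le> L * dist y z" for y z
  proof (cases "y = z")
    case True then show ?thesis by simp
  next
    case False
    then have dp: "0 < dist y z" by simp
    have "\<bar>A2 y - A2 z\<bar> / dist y z \<le> L" unfolding L_def Lip_def
    proof (rule cInf_greatest)
      show "{C. lipschitz_on C UNIV A2} \<noteq> {}" using CS by blast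
      fix C' assume "C' \<in> {C. lipschitz_on C UNIV A2}"
      then have "dist (A2 y) (A2 z) \<le> C' * dist y z" by (intro lipschitz_onD) auto
      then show "\<bar>A2 y - A2 z\<bar> / dist y z \<le> C'" using dp by (simp add: dist_real_def divide_le_eq)
    qed
    then show ?thesis using dp by (simp add: divide_le_eq)
  qed
  have key: "W1 \<nu>1 \<nu>2 \<le> Dd * S + (L * Dd + 1) * (d_inf F1 F2 + e)" if e: "0 < e" for e
  proof -
    interpret sys k F1 F2 A1 A2 "d_inf F1 F2 + e" e
    proof
      show "compact (UNIV :: 'a set)" by (rule cpt)
      show "is_ICS k F1" "is_ICS k F2" by (rule assms(2), rule assms(3))
      show "continuous_on UNIV A1" by (rule assms(4))
      show "continuous_on UNIV A2" by (rule cA2)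
      show "normalized A1 F1" "normalized A2 F2" by (rule assms(5), rule assms(6))
      show "0 < e" by (rule e)
      fix x
      show "\<exists>\<sigma>\<in>PK k. \<exists>\<tau>\<in>PK k. Dm k (permute_list \<sigma> (enum F1 x)) (permute_list \<tau> (enum F2 x)) \<le> d_inf F1 F2 + e - e"
        using dinf_good[OF assms(2) assms(3) Dd, of x] by simp
    qed
    show ?thesis by (rule coupling_bound[OF assms(8) assms(9) assms(10) assms(11) Dd Sb Lb L0])
  qed
  have LD: "0 < L * Dd + 1" using L0 Dd0 by (simp add: add_nonneg_pos)
  have "W1 \<nu>1 \<nu>2 \<le> (Dd * S + (L * Dd + 1) * d_inf F1 F2) + e'" if e': "0 < e'" for e'
  proof -
    have "W1 \<nu>1 \<nu>2 \<le> Dd * S + (L * Dd + 1) * (d_inf F1 F2 + e' / (L * Dd + 1))"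
      using key[of "e' / (L * Dd + 1)"] e' LD by simp
    also have "\<dots> = (Dd * S + (L * Dd + 1) * d_inf F1 F2) + e'"
      using LD by (simp add: distrib_left)
    finally show ?thesis .
  qed
  then have "W1 \<nu>1 \<nu>2 \<le> Dd * S + (L * Dd + 1) * d_inf F1 F2" by (rule field_le_epsilon)
  then show ?thesis unfolding Dd_def S_def L_def by (simp add: mult.commute)
qed


end
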